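(* Let $m\geq 1$ and let $f\colon\mathbb{P}^2\dashrightarrow\mathbb{P}^2$ be a quadratic transformation defined over $\mathbb{F}_{2^m}$ that is bijective on $\mathbb{F}_{2^m}$-points, i.e. $f$ and $f^{-1}$ are defined at every point of $\mathbb{P}^2(\mathbb{F}_{2^m})$. Then the permutation of $\mathbb{P}^2(\mathbb{F}_{2^m})$ induced by $f$ is odd when $m=1$ and even when $m>1$.
   Context: A quadratic transformation is the birational map $\mathbb{P}^2\dashrightarrow\mathbb{P}^2$ defined by the linear system of conics passing through three non-collinear (geometric) points; up to projective transformations over the algebraic closure it is $[x:y:z]\mapsto[yz:xz:xy]$. *)

theory Defs
  imports "HOL-Algebra.Algebraic_Closure_Type" "HOL-Combinatorics.Permutations"
begin

type_synonym 'a tri = "'a \<times> 'a \<times> 'a"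

definition comp3 :: "'a tri \<Rightarrow> nat \<Rightarrow> 'a" where
  "comp3 v i = (case v of (x, y, z) \<Rightarrow> if i = 0 then x else if i = 1 then y else z)"

definition mk3 :: "(nat \<Rightarrow> 'a) \<Rightarrow> 'a tri" where
  "mk3 f = (f 0, f 1, f 2)"

definition smult3 :: "'a::times \<Rightarrow> 'a tri \<Rightarrow> 'a tri" where
  "smult3 c v = (case v of (x, y, z) \<Rightarrow> (c * x, c * y, c * z))"

definition quadmap :: "(nat \<Rightarrow> nat \<Rightarrow> nat \<Rightarrow> 'a::comm_semiring_1) \<Rightarrow> 'a tri \<Rightarrow> 'a tri" where
  "quadmap C v = mk3 (\<lambda>k. \<Sum>i<3. \<Sum>j<3. C k i j * comp3 v i * comp3 v j)"

definition linmap :: "(nat \<Rightarrow> nat \<Rightarrow> 'a::comm_semiring_1) \<Rightarrow> 'a tri \<Rightarrow> 'a tri" where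
  "linmap M v = mk3 (\<lambda>k. \<Sum>i<3. M k i * comp3 v i)"

definition det3 :: "(nat \<Rightarrow> nat \<Rightarrow> 'a::comm_ring_1) \<Rightarrow> 'a" where
  "det3 M = M 0 0 * (M 1 1 * M 2 2 - M 1 2 * M 2 1)
          - M 0 1 * (M 1 0 * M 2 2 - M 1 2 * M 2 0)
          + M 0 2 * (M 1 0 * M 2 1 - M 1 1 * M 2 0)"

definition stdquad :: "'a::times tri \<Rightarrow> 'a tri" where
  "stdquad v = (case v of (x, y, z) \<Rightarrow> (y * z, x * z, x * y))"

definition lift_coeffs :: "(nat \<Rightarrow> nat \<Rightarrow> nat \<Rightarrow> 'a::field) \<Rightarrow> nat \<Rightarrow> nat \<Rightarrow> nat \<Rightarrow> 'a alg_closure" where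
  "lift_coeffs C = (\<lambda>k i j. to_ac (C k i j))"

(* C (with coefficients in the field 'a) defines a quadratic transformation:
   over the algebraic closure it equals A o stdquad o B with A, B invertible
   (equality of the defining quadratic forms, the scalar being absorbed in A). *)
definition quadratic_transformation :: "(nat \<Rightarrow> nat \<Rightarrow> nat \<Rightarrow> 'a::field) \<Rightarrow> bool" where
  "quadratic_transformation C \<longleftrightarrow>
     (\<exists>A B :: nat \<Rightarrow> nat \<Rightarrow> 'a alg_closure.
        det3 A \<noteq> 0 \<and> det3 B \<noteq> 0 \<and>
        (\<forall>v. quadmap (lift_coeffs C) v = linmap A (stdquad (linmap B v))))"

definition parallel3 :: "'a::comm_ring_1 tri \<Rightarrow> 'a tri \<Rightarrow> bool" where
  "parallel3 u v \<longleftrightarrow> (\<forall>i<3. \<forall>j<3. comp3 u i * comp3 v j = comp3 u j * comp3 v i)"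

(* D (quadratic, coefficients in 'a) defines the inverse rational map of C:
   D o C = id as rational maps over the algebraic closure, i.e. D(C(v)) is
   proportional to v identically and D o C is not identically zero. *)
definition inverse_quadmap :: "(nat \<Rightarrow> nat \<Rightarrow> nat \<Rightarrow> 'a::field) \<Rightarrow> (nat \<Rightarrow> nat \<Rightarrow> nat \<Rightarrow> 'a) \<Rightarrow> bool" where
  "inverse_quadmap D C \<longleftrightarrow>
     (\<forall>v. parallel3 (quadmap (lift_coeffs D) (quadmap (lift_coeffs C) v)) v) \<and>
     (\<exists>v. quadmap (lift_coeffs D) (quadmap (lift_coeffs C) v) \<noteq> (0, 0, 0))"

definition proj_pt :: "'a::field tri \<Rightarrow> 'a tri set" where
  "proj_pt v = {smult3 c v | c. c \<noteq> 0}"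

definition P2 :: "'a::field tri set set" where
  "P2 = {proj_pt v | v. v \<noteq> (0, 0, 0)}"

definition induced_map :: "(nat \<Rightarrow> nat \<Rightarrow> nat \<Rightarrow> 'a::field) \<Rightarrow> 'a tri set \<Rightarrow> 'a tri set" where
  "induced_map C P = (if P \<in> P2 then proj_pt (quadmap C (SOME v. v \<in> P)) else P)"

end

theory Submission
  imports Defs "HOL-Number_Theory.Residues" "HOL-Library.Product_Plus"
begin

section \<open>Permutation lemmas\<close>

lemma moved_finite:
  assumes "finite S" "p permutes S"
  shows "finite {x. p x \<noteq> x}"
  using assms by (metis (mono_tags) finite_subset mem_Collect_eq permutes_not_in subsetI)

lemma involution_evenperm_aux:
  "finite S \<Longrightarrow> p permutes S \<Longrightarrow> p \<circ> p = id \<Longrightarrow> card {x. p x \<noteq> x} = n \<Longrightarrow>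
    even n \<and> evenperm p = even (n div 2)"
proof (induction n arbitrary: p rule: less_induct)
  case (less n)
  have fin: "finite {x. p x \<noteq> x}" using moved_finite[OF less.prems(1,2)] .
  show ?case
  proof (cases "n = 0")
    case True
    have "{x. p x \<noteq> x} = {}" using less.prems True fin by simp
    then have "p = id" by (auto simp: fun_eq_iff)
    then show ?thesis using True by simp
  next
    case False
    have "{x. p x \<noteq> x} \<noteq> {}" using less.prems(4) False by (metis card.empty)
    then obtain x where x: "p x \<noteq> x" by auto
    define y where "y = p x"
    have pp: "p (p z) = z" for z using less.prems(3) by (metis comp_apply id_apply)
    have py: "p y = x" using pp y_def by simp
    have xy: "x \<noteq> y" using x y_def by simp
    have xS: "x \<in> S" using x less.prems(2) permutes_not_in by fastforce
    have yS: "y \<in> S" using py xy less.prems(2) permutes_not_in by fastforce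
    define p' where "p' = transpose x y \<circ> p"
    have p'S: "p' permutes S" unfolding p'_def
      by (rule permutes_compose[OF less.prems(2)]) (rule permutes_swap_id[OF xS yS])
    have p'z: "p' z = (if z = x \<or> z = y then z else p z)" for z
    proof -
      have "z \<noteq> x \<Longrightarrow> z \<noteq> y \<Longrightarrow> p z \<noteq> x \<and> p z \<noteq> y" using pp py y_def by metis
      then show ?thesis unfolding p'_def using py y_def by (auto simp: transpose_def)
    qed
    have p'p': "p' \<circ> p' = id"
      by (auto simp: fun_eq_iff p'z pp) (metis pp py y_def)+
    have mv: "{z. p' z \<noteq> z} = {z. p z \<noteq> z} - {x, y}" by (auto simp: p'z)
    have cn: "card {z. p' z \<noteq> z} = n - 2"
      unfolding mv using less.prems(4) x xy py fin by (simp add: card_Diff_subset)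
    have n2: "n \<ge> 2"
    proof -
      have "{x, y} \<subseteq> {z. p z \<noteq> z}" using x xy py by auto
      then have "card {x, y} \<le> n" using card_mono[OF fin] less.prems(4) by blast
      then show ?thesis using xy by simp
    qed
    have ih: "even (n - 2) \<and> evenperm p' = even ((n - 2) div 2)"
      using less.IH[OF _ less.prems(1) p'S p'p' cn] n2 by simp
    have peq: "p = transpose x y \<circ> p'" unfolding p'_def by (simp add: fun_eq_iff)
    have "permutation p'" using p'S less.prems(1) permutation_permutes by blast
    then have "evenperm p = (evenperm (transpose x y) = evenperm p')"
      using peq evenperm_comp permutation_swap_id by metis
    then have ep: "evenperm p = (\<not> even ((n - 2) div 2))" using ih xy by (simp add: evenperm_swap)
    obtain j where j: "n - 2 = 2 * j" using ih by blast
    then have nj: "n = 2 * j + 2" using n2 by simp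
    show ?thesis using ep unfolding nj by simp
  qed
qed

lemma involution_evenperm:
  assumes "finite S" "p permutes S" "p \<circ> p = id"
  shows "evenperm p = even (card {x. p x \<noteq> x} div 2)"
  using involution_evenperm_aux[OF assms refl] by simp

lemma permutation_funpow: "permutation p \<Longrightarrow> permutation (p ^^ n)"
  by (induction n) (auto simp: permutation_compose)

lemma evenperm_funpow: "permutation p \<Longrightarrow> evenperm (p ^^ n) = (even n \<or> evenperm p)"
  by (induction n) (auto simp: evenperm_comp permutation_funpow)

lemma evenperm_odd_order:
  assumes "permutation p" "p ^^ n = id" "odd n"
  shows "evenperm p"
  using evenperm_funpow[OF assms(1), of n] assms by simp


section \<open>Projective plane basics\<close>

lemma smult3_simp [simp]: "smult3 c (x, y, z) = (c * x, c * y, c * z)"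
  by (simp add: smult3_def)

lemma smult3_1 [simp]: "smult3 1 v = (v :: 'a::comm_semiring_1 tri)"
  by (cases v) auto

lemma smult3_smult3 [simp]: "smult3 c (smult3 d v) = smult3 (c * d) (v :: 'a::comm_semiring_1 tri)"
  by (cases v) (auto simp: mult.assoc)

lemma smult3_eq_0: "smult3 c v = (0, 0, 0) \<longleftrightarrow> c = 0 \<or> v = (0, 0, 0 :: 'a::field)"
  by (cases v) auto

lemma smult3_cancel: "c \<noteq> 0 \<Longrightarrow> smult3 c v = smult3 c w \<longleftrightarrow> v = (w :: 'a::field tri)"
  by (cases v; cases w) auto

lemma in_proj_pt: "w \<in> proj_pt v \<longleftrightarrow> (\<exists>c. c \<noteq> 0 \<and> w = smult3 c v)"
  by (auto simp: proj_pt_def)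

lemma self_in_proj_pt: "v \<in> proj_pt (v :: 'a::field tri)"
  unfolding in_proj_pt by (rule exI[of _ 1]) simp

lemma proj_pt_eq_iff:
  "proj_pt w = proj_pt v \<longleftrightarrow> (\<exists>c. c \<noteq> 0 \<and> w = smult3 c (v :: 'a::field tri))"
proof
  assume "proj_pt w = proj_pt v"
  then show "\<exists>c. c \<noteq> 0 \<and> w = smult3 c v" using self_in_proj_pt[of w] by (simp add: in_proj_pt)
next
  assume "\<exists>c. c \<noteq> 0 \<and> w = smult3 c v"
  then obtain c where c: "c \<noteq> 0" "w = smult3 c v" by auto
  have "x \<in> proj_pt w \<longleftrightarrow> x \<in> proj_pt v" for x
    unfolding in_proj_pt c(2)
  proof
    assume "\<exists>d. d \<noteq> 0 \<and> x = smult3 d (smult3 c v)"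
    then show "\<exists>d. d \<noteq> 0 \<and> x = smult3 d v" using c(1) by (metis smult3_smult3 no_zero_divisors)
  next
    assume "\<exists>d. d \<noteq> 0 \<and> x = smult3 d v"
    then obtain d where "d \<noteq> 0" "x = smult3 d v" by auto
    then show "\<exists>d. d \<noteq> 0 \<and> x = smult3 d (smult3 c v)"
      using c(1) by (intro exI[of _ "d / c"]) auto
  qed
  then show "proj_pt w = proj_pt v" by blast
qed

lemma mem_proj_pt_eq: "x \<in> proj_pt v \<Longrightarrow> proj_pt x = proj_pt (v :: 'a::field tri)"
  by (simp only: in_proj_pt proj_pt_eq_iff)

lemma proj_pt_smult: "c \<noteq> 0 \<Longrightarrow> proj_pt (smult3 c v) = proj_pt (v :: 'a::field tri)"
  using proj_pt_eq_iff by blast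

lemma proj_pt_in_P2: "v \<noteq> (0, 0, 0) \<Longrightarrow> proj_pt v \<in> P2"
  unfolding P2_def by blast

lemma proj_pt_nonzero: "v \<noteq> (0, 0, 0) \<Longrightarrow> w \<in> proj_pt v \<Longrightarrow> w \<noteq> (0, 0, (0::'a::field))"
  by (metis in_proj_pt smult3_eq_0)

lemma P2_rep:
  assumes "P \<in> (P2 :: 'a::field tri set set)"
  shows "(SOME v. v \<in> P) \<in> P" "(SOME v. v \<in> P) \<noteq> (0, 0, 0)" "proj_pt (SOME v. v \<in> P) = P"
proof -
  obtain v where v: "v \<noteq> (0, 0, 0)" "P = proj_pt v" using assms by (auto simp: P2_def)
  then have "v \<in> P" using self_in_proj_pt by blast
  then show s: "(SOME v. v \<in> P) \<in> P" by (rule someI)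
  then show "(SOME v. v \<in> P) \<noteq> (0, 0, 0)" using v proj_pt_nonzero by blast
  from s v show "proj_pt (SOME v. v \<in> P) = P" by (auto simp: in_proj_pt proj_pt_eq_iff)
qed

lemma P2_cases:
  assumes "P \<in> (P2 :: 'a::field tri set set)"
  obtains v where "v \<noteq> (0, 0, 0)" "P = proj_pt v"
  using assms by (auto simp: P2_def)

lemma finite_P2: "finite (P2 :: 'a::{field,finite} tri set set)"
  by (rule finite_subset[of _ "Pow UNIV"]) auto

definition pact :: "('a::field tri \<Rightarrow> 'a tri) \<Rightarrow> 'a tri set \<Rightarrow> 'a tri set" where
  "pact g P = (if P \<in> P2 then proj_pt (g (SOME v. v \<in> P)) else P)"

definition homog :: "('a::field tri \<Rightarrow> 'a tri) \<Rightarrow> bool" where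
  "homog g \<longleftrightarrow> (\<forall>v. v \<noteq> (0, 0, 0) \<longrightarrow> g v \<noteq> (0, 0, 0)) \<and>
     (\<forall>c v. c \<noteq> 0 \<longrightarrow> (\<exists>d. d \<noteq> 0 \<and> g (smult3 c v) = smult3 d (g v)))"

lemma induced_map_pact: "induced_map C = pact (quadmap C)"
  by (simp add: fun_eq_iff induced_map_def pact_def)

lemma pact_proj:
  assumes "homog g" "v \<noteq> (0, 0, 0)"
  shows "pact g (proj_pt v) = proj_pt (g v)"
proof -
  have P: "proj_pt v \<in> P2" using assms(2) by (rule proj_pt_in_P2)
  define u where "u = (SOME w. w \<in> proj_pt v)"
  have "u \<in> proj_pt v" using P2_rep(1)[OF P] u_def by simp
  then obtain c where c: "c \<noteq> 0" "u = smult3 c v" by (auto simp: in_proj_pt)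
  then obtain d where "d \<noteq> 0" "g u = smult3 d (g v)" using assms(1) unfolding homog_def by blast
  then have "proj_pt (g u) = proj_pt (g v)" by (simp add: proj_pt_smult)
  then show ?thesis using P by (simp add: pact_def u_def)
qed

lemma pact_outside: "P \<notin> P2 \<Longrightarrow> pact g P = P"
  by (simp add: pact_def)

lemma homog_nonzero: "homog g \<Longrightarrow> v \<noteq> (0, 0, 0) \<Longrightarrow> g v \<noteq> (0, 0, 0)"
  unfolding homog_def by blast

lemma pact_P2:
  assumes "homog g" "P \<in> P2"
  shows "pact g P \<in> P2"
proof -
  obtain v where v: "v \<noteq> (0, 0, 0)" "P = proj_pt v" using assms(2) by (rule P2_cases)
  have "g v \<noteq> (0, 0, 0)" using homog_nonzero[OF assms(1) v(1)] .
  then show ?thesis using v pact_proj[OF assms(1) v(1)] proj_pt_in_P2 by simp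
qed

lemma homog_scale: "homog g \<Longrightarrow> c \<noteq> 0 \<Longrightarrow> \<exists>d. d \<noteq> 0 \<and> g (smult3 c v) = smult3 d (g v)"
  unfolding homog_def by blast

lemma homog_comp:
  fixes g h :: "'a::field tri \<Rightarrow> 'a tri"
  assumes "homog g" "homog h"
  shows "homog (g \<circ> h)"
proof -
  have "(g \<circ> h) v \<noteq> (0, 0, 0)" if "v \<noteq> (0, 0, 0)" for v
    using homog_nonzero[OF assms(1) homog_nonzero[OF assms(2) that]] by simp
  moreover have "\<exists>d. d \<noteq> 0 \<and> (g \<circ> h) (smult3 c v) = smult3 d ((g \<circ> h) v)" if c: "c \<noteq> 0" for c v
  proof -
    obtain d where d: "d \<noteq> 0" "h (smult3 c v) = smult3 d (h v)" using homog_scale[OF assms(2) c] by blast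
    obtain e where e: "e \<noteq> 0" "g (smult3 d (h v)) = smult3 e (g (h v))" using homog_scale[OF assms(1) d(1)] by blast
    show ?thesis using d e by auto
  qed
  ultimately show ?thesis unfolding homog_def by blast
qed

lemma pact_comp:
  assumes "homog g" "homog h"
  shows "pact (g \<circ> h) = pact g \<circ> pact h"
proof
  fix P
  show "pact (g \<circ> h) P = (pact g \<circ> pact h) P"
  proof (cases "P \<in> P2")
    case True
    then obtain v where v: "v \<noteq> (0, 0, 0)" "P = proj_pt v" by (rule P2_cases)
    have "h v \<noteq> (0, 0, 0)" using assms(2) v(1) by (rule homog_nonzero)
    then show ?thesis using v assms homog_comp[OF assms] by (simp add: pact_proj)
  qed (simp add: pact_outside)
qed

lemma pact_cong:
  assumes "\<And>v. v \<noteq> (0, 0, 0) \<Longrightarrow> \<exists>c. c \<noteq> 0 \<and> g v = smult3 c (h v)"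
  shows "pact g = pact h"
proof
  fix P
  show "pact g P = pact h P"
  proof (cases "P \<in> P2")
    case True
    define u where "u = (SOME w. w \<in> P)"
    have "u \<noteq> (0, 0, 0)" using P2_rep(2)[OF True] u_def by simp
    then obtain c where "c \<noteq> 0" "g u = smult3 c (h u)" using assms by blast
    then show ?thesis using True by (simp add: pact_def u_def[symmetric] proj_pt_smult)
  qed (simp add: pact_outside)
qed

lemma pact_permutes:
  fixes g :: "'a::{field,finite} tri \<Rightarrow> 'a tri"
  assumes "homog g"
    and inj: "\<And>v w. v \<noteq> (0, 0, 0) \<Longrightarrow> w \<noteq> (0, 0, 0) \<Longrightarrow> proj_pt (g v) = proj_pt (g w) \<Longrightarrow> proj_pt v = proj_pt w"
  shows "pact g permutes P2"
proof (rule bij_imp_permutes)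
  have sub: "pact g ` P2 \<subseteq> P2" using pact_P2[OF assms(1)] by blast
  have injon: "inj_on (pact g) P2"
  proof (rule inj_onI)
    fix P Q assume PQ: "P \<in> P2" "Q \<in> P2" "pact g P = pact g Q"
    obtain v where v: "v \<noteq> (0, 0, 0)" "P = proj_pt v" using PQ(1) by (rule P2_cases)
    obtain w where w: "w \<noteq> (0, 0, 0)" "Q = proj_pt w" using PQ(2) by (rule P2_cases)
    have "proj_pt (g v) = proj_pt (g w)" using PQ(3) v w by (simp add: pact_proj[OF assms(1)])
    then show "P = Q" using inj[OF v(1) w(1)] v(2) w(2) by simp
  qed
  have "pact g ` P2 = P2" using endo_inj_surj[OF finite_P2 sub injon] .
  then show "bij_betw (pact g) P2 P2" using injon by (simp add: bij_betw_def)
qed (simp add: pact_outside)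

lemma permutation_pact:
  fixes g :: "'a::{field,finite} tri \<Rightarrow> 'a tri"
  shows "pact g permutes P2 \<Longrightarrow> permutation (pact g)"
  using finite_P2 permutation_permutes by blast

lemma card_proj_pt:
  assumes "v \<noteq> (0, 0, 0)"
  shows "card (proj_pt (v :: 'a::{field,finite} tri)) = card (UNIV :: 'a set) - 1"
proof -
  have "proj_pt v = (\<lambda>c. smult3 c v) ` (UNIV - {0})" by (auto simp: proj_pt_def)
  moreover have "inj_on (\<lambda>c. smult3 c v) (UNIV - {0})"
  proof (rule inj_onI)
    fix c d assume "smult3 c v = smult3 d v"
    then have "smult3 (c - d) v = (0, 0, 0)" by (cases v) (auto simp: algebra_simps)
    then show "c = d" using assms by (simp add: smult3_eq_0)
  qed
  ultimately show ?thesis by (simp add: card_image card_Diff_singleton)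
qed

lemma card_scaled:
  fixes S :: "'a::{field,finite} tri set"
  assumes nz: "\<And>v. v \<in> S \<Longrightarrow> v \<noteq> (0, 0, 0)"
    and cl: "\<And>v c. v \<in> S \<Longrightarrow> c \<noteq> 0 \<Longrightarrow> smult3 c v \<in> S"
  shows "card S = (card (UNIV :: 'a set) - 1) * card (proj_pt ` S)"
proof -
  have U: "\<Union> (proj_pt ` S) = S"
  proof
    show "\<Union> (proj_pt ` S) \<subseteq> S" using cl by (auto simp: in_proj_pt)
    show "S \<subseteq> \<Union> (proj_pt ` S)" using self_in_proj_pt by blast
  qed
  have "(card (UNIV :: 'a set) - 1) * card (proj_pt ` S) = card (\<Union> (proj_pt ` S))"
  proof (rule card_partition)
    show "finite (proj_pt ` S)" by simp
    show "finite (\<Union> (proj_pt ` S))" by simp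
    show "\<And>c. c \<in> proj_pt ` S \<Longrightarrow> card c = card (UNIV :: 'a set) - 1" using nz card_proj_pt by blast
    show "\<And>c1 c2. c1 \<in> proj_pt ` S \<Longrightarrow> c2 \<in> proj_pt ` S \<Longrightarrow> c1 \<noteq> c2 \<Longrightarrow> c1 \<inter> c2 = {}"
    proof -
      fix c1 c2 assume "c1 \<in> proj_pt ` S" "c2 \<in> proj_pt ` S" "c1 \<noteq> c2"
      from \<open>c1 \<in> proj_pt ` S\<close> obtain v where v: "c1 = proj_pt v" by blast
      from \<open>c2 \<in> proj_pt ` S\<close> obtain w where w: "c2 = proj_pt w" by blast
      note vw = v w
      have "x \<in> c1 \<Longrightarrow> x \<in> c2 \<Longrightarrow> False" for x
        using mem_proj_pt_eq[of x v] mem_proj_pt_eq[of x w] vw \<open>c1 \<noteq> c2\<close> by simp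
      then show "c1 \<inter> c2 = {}" by blast
    qed
  qed
  then show ?thesis using U by simp
qed

lemma card_tri: "card (UNIV :: 'a::finite tri set) = card (UNIV :: 'a set) ^ 3"
proof -
  have "(UNIV :: 'a tri set) = UNIV \<times> (UNIV \<times> UNIV)" by simp
  then have "card (UNIV :: 'a tri set) = card (UNIV :: 'a set) * (card (UNIV :: 'a set) * card (UNIV :: 'a set))"
    by (metis card_cartesian_product)
  then show ?thesis by (simp add: power3_eq_cube)
qed

lemma P2_image: "P2 = proj_pt ` (UNIV - {(0, 0, 0 :: 'a::field)})"
  by (auto simp: P2_def)

lemma card_P2:
  assumes "card (UNIV :: 'a::{field,finite} set) = q"
  shows "card (P2 :: 'a tri set set) = q^2 + q + 1"
proof -
  have q2: "q \<ge> 2"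
  proof -
    have "card {0, 1::'a} \<le> card (UNIV :: 'a set)" by (rule card_mono) auto
    then show ?thesis using assms by simp
  qed
  have "card (UNIV - {((0, 0, 0) :: 'a tri)}) = (card (UNIV :: 'a set) - 1) * card (proj_pt ` (UNIV - {((0, 0, 0) :: 'a tri)}))"
    by (rule card_scaled) (auto simp: smult3_eq_0)
  then have "card (UNIV - {((0, 0, 0) :: 'a tri)}) = (q - 1) * card (P2 :: 'a tri set set)"
    unfolding P2_image assms .
  moreover have "card (UNIV - {((0, 0, 0) :: 'a tri)}) = q^3 - 1"
    using card_tri[where 'a='a] assms by (simp add: card_Diff_singleton)
  moreover have "(q - 1) * (q^2 + q + 1) = q^3 - 1"
  proof -
    obtain k where "q = Suc k" using q2 by (cases q) auto
    then show ?thesis by (simp add: algebra_simps power2_eq_square power3_eq_cube)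
  qed
  ultimately have "(q - 1) * card (P2 :: 'a tri set set) = (q - 1) * (q^2 + q + 1)"
    by simp
  moreover have "q - 1 \<noteq> 0" using q2 by simp
  ultimately show ?thesis using mult_left_cancel by blast
qed


section \<open>Characteristic 2 facts\<close>

lemma char2_of_card:
  assumes "card (UNIV :: 'a::{field,finite} set) = 2 ^ m" "m \<ge> 1"
  shows "(2::'a) = 0"
proof -
  have pos: "CHAR('a) > 0" by (rule finite_imp_CHAR_pos) simp
  have pr: "prime CHAR('a)" using prime_CHAR_semidom[OF pos] .
  have "CHAR('a) dvd 2 ^ m" using CHAR_dvd_CARD[where 'a='a] assms(1) by simp
  then have "CHAR('a) dvd 2" using pr prime_dvd_power by blast
  then have "CHAR('a) = 2" using pr primes_dvd_imp_eq two_is_prime_nat by blast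
  then have "of_nat 2 = (0::'a)" using of_nat_CHAR[where 'a='a] by simp
  then show ?thesis by simp
qed

lemma char2_double: "(2::'a::comm_ring_1) = 0 \<Longrightarrow> x + x = (0::'a)"
  by (metis mult_2 mult_zero_left)
lemma char2_neg: "(2::'a::comm_ring_1) = 0 \<Longrightarrow> - x = (x::'a)"
  by (metis char2_double add_eq_0_iff)
lemma char2_diff: "(2::'a::comm_ring_1) = 0 \<Longrightarrow> x - y = x + (y::'a)"
  by (metis char2_neg diff_conv_add_uminus)
lemma char2_sq_add: "(2::'a::comm_ring_1) = 0 \<Longrightarrow> (x + y) ^ 2 = x ^ 2 + (y::'a) ^ 2"
proof -
  assume two: "(2::'a) = 0"
  have "(x + y) ^ 2 = x ^ 2 + y ^ 2 + (x * y + x * y)" by (simp add: power2_eq_square algebra_simps)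
  then show ?thesis by (simp only: char2_double[OF two] add_0_right)
qed

lemma char2_pow2_add: "(2::'a::comm_ring_1) = 0 \<Longrightarrow> (x + y) ^ (2 ^ n) = x ^ (2 ^ n) + (y::'a) ^ (2 ^ n)"
proof (induction n)
  case (Suc n)
  have "(x + y) ^ (2 ^ Suc n) = ((x + y) ^ (2 ^ n)) ^ 2" by (simp add: power_mult[symmetric] mult.commute)
  also have "\<dots> = (x ^ (2 ^ n) + y ^ (2 ^ n)) ^ 2" using Suc.IH[OF Suc.prems] by simp
  also have "\<dots> = (x ^ (2 ^ n)) ^ 2 + (y ^ (2 ^ n)) ^ 2" using char2_sq_add[OF Suc.prems] .
  also have "\<dots> = x ^ (2 ^ Suc n) + y ^ (2 ^ Suc n)" by (simp add: power_mult[symmetric] mult.commute)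
  finally show ?case .
qed simp

lemma fermat_finite_field:
  fixes x :: "'a::{field,finite}"
  shows "x ^ card (UNIV :: 'a set) = x"
proof (cases "x = 0")
  case True
  have "card (UNIV :: 'a set) > 0" by (simp add: finite_UNIV_card_ge_0)
  then show ?thesis using True by simp
next
  case False
  define U where "U = (UNIV :: 'a set) - {0}"
  have fU: "finite U" by (simp add: U_def)
  have "bij_betw (\<lambda>y. x * y) U U"
    unfolding U_def using False
    by (intro bij_betwI[where g="\<lambda>y. y / x"]) auto
  then have "prod (\<lambda>y. x * y) U = prod id U"
    using prod.reindex_bij_betw[of "\<lambda>y. x * y" U U id] by simp
  moreover have "prod (\<lambda>y. x * y) U = x ^ card U * prod id U"
    by (simp add: prod.distrib)
  moreover have "prod id U \<noteq> 0" using fU by (simp add: U_def)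
  ultimately have "x ^ card U = 1" by simp
  moreover have "card U = card (UNIV :: 'a set) - 1" by (simp add: U_def card_Diff_singleton)
  moreover have "card (UNIV :: 'a set) > 0" by (simp add: finite_UNIV_card_ge_0)
  ultimately have "x ^ (card (UNIV :: 'a set) - 1) = 1" by simp
  moreover obtain k where "card (UNIV :: 'a set) = Suc k" using \<open>card (UNIV :: 'a set) > 0\<close> by (cases "card (UNIV :: 'a set)") auto
  ultimately show ?thesis by simp
qed

lemma char2_sq_inj: "(2::'a::field) = 0 \<Longrightarrow> x ^ 2 = y ^ 2 \<Longrightarrow> x = (y::'a)"
proof -
  assume two: "(2::'a) = 0" and "x ^ 2 = y ^ 2"
  then have "(x + y) ^ 2 = 0" using char2_sq_add[OF two] char2_double[OF two] by simp
  then have "x + y = 0" by simp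
  then show "x = y" using char2_neg[OF two, of y] by (simp add: add_eq_0_iff)
qed

lemma char2_pow2_inj: "(2::'a::field) = 0 \<Longrightarrow> x ^ (2 ^ n) = y ^ (2 ^ n) \<Longrightarrow> x = (y::'a)"
proof (induction n)
  case (Suc n)
  have "(x ^ (2 ^ n)) ^ 2 = (y ^ (2 ^ n)) ^ 2"
    using Suc.prems(2) by (simp add: power_mult[symmetric] mult.commute)
  then show ?case using Suc char2_sq_inj by blast
qed simp

lemma square_root_finite_field:
  fixes x :: "'a::{field,finite}"
  assumes "card (UNIV :: 'a set) = 2 ^ m" "m \<ge> 1"
  shows "\<exists>y. y ^ 2 = x"
proof -
  have "(x ^ (2 ^ (m - 1))) ^ 2 = x ^ (2 ^ m)"
  proof -
    obtain k where "m = Suc k" using assms(2) by (cases m) auto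
    then show ?thesis by (simp add: power_mult[symmetric] mult.commute)
  qed
  also have "\<dots> = x" using fermat_finite_field[of x] assms(1) by simp
  finally show ?thesis by blast
qed

section \<open>The algebraic closure\<close>

lemma ac_char2: "(2::'a::field) = 0 \<Longrightarrow> (2::'a alg_closure) = 0"
  by (metis to_ac_numeral to_ac_0)

lemma fixed_field:
  fixes x :: "'a::{field,finite} alg_closure"
  assumes "card (UNIV :: 'a set) = q" 
  shows "x ^ q = x \<longleftrightarrow> x \<in> range to_ac"
proof
  assume "x \<in> range to_ac"
  then show "x ^ q = x" using fermat_finite_field assms by (metis rangeE to_ac_power)
next
  assume x: "x ^ q = x"
  have q2: "q \<ge> 2"
  proof -
    have "card {0, 1::'a} \<le> card (UNIV :: 'a set)" by (rule card_mono) auto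
    then show ?thesis using assms by simp
  qed
  define p :: "'a alg_closure poly" where "p = monom 1 q + [:0, -1:]"
  have dp: "degree p = q" unfolding p_def using q2
    by (subst degree_add_eq_left) (simp_all add: degree_monom_eq)
  then have pnz: "p \<noteq> 0" using q2 by auto
  have root: "poly p y = 0 \<longleftrightarrow> y ^ q = y" for y by (simp add: p_def poly_monom)
  have "card {y. poly p y = 0} \<le> q" using card_poly_roots_bound[OF pnz] dp by simp
  moreover have sub: "range to_ac \<subseteq> {y. poly p y = 0}"
    using root fermat_finite_field assms by (auto simp del: to_ac_power simp: to_ac_power[symmetric])
  moreover have "card (range (to_ac :: 'a \<Rightarrow> 'a alg_closure)) = q"
    using assms by (simp add: card_image inj_to_ac)
  moreover have "finite {y. poly p y = 0}" using poly_roots_finite[OF pnz] .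
  ultimately have "range to_ac = {y. poly p y = 0}" by (metis card_subset_eq card_mono antisym)
  then show "x \<in> range to_ac" using x root by auto
qed


lemma zero_tri: "(0 :: 'a::zero tri) = (0, 0, 0)"
  by (simp add: zero_prod_def)

lemma comp3_simps [simp]:
  "comp3 (x, y, z) 0 = x" "comp3 (x, y, z) (Suc 0) = y" "comp3 (x, y, z) 2 = z"
  by (simp_all add: comp3_def)

lemma comp3_add: "comp3 (u + w) i = comp3 u i + comp3 (w :: 'a::plus tri) i"
  by (cases u; cases w) (simp add: comp3_def)

lemma comp3_smult: "comp3 (smult3 c u) i = c * comp3 (u :: 'a::times tri) i"
  by (cases u) (simp add: comp3_def)

lemma mk3_add: "mk3 f + mk3 g = mk3 (\<lambda>k. f k + (g k :: 'a::plus))"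
  by (simp add: mk3_def)

lemma smult3_mk3: "smult3 c (mk3 f) = mk3 (\<lambda>k. c * (f k :: 'a::times))"
  by (simp add: mk3_def)

lemma smult3_add: "smult3 c (u + w) = smult3 c u + smult3 c (w :: 'a::comm_semiring_1 tri)"
  by (cases u; cases w) (simp add: algebra_simps)

lemma smult3_add_left: "smult3 (c + d) u = smult3 c u + smult3 d (u :: 'a::comm_semiring_1 tri)"
  by (cases u) (simp add: algebra_simps)

lemma smult3_0 [simp]: "smult3 0 u = (0, 0, 0 :: 'a::comm_semiring_1)"
  by (cases u) simp

lemma smult3_zero [simp]: "smult3 c (0 :: 'a::comm_semiring_1 tri) = 0"
  by (simp add: zero_tri)

lemma sum3: "(\<Sum>i<(3::nat). f i) = f 0 + f 1 + (f 2 :: 'a::comm_monoid_add)"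
  by (simp add: numeral_3_eq_3 numeral_2_eq_2 lessThan_Suc add.commute add.left_commute)

lemma mk3_eq: "mk3 f = (f 0, f 1, f 2)"
  by (simp add: mk3_def)

section \<open>Bilinear forms\<close>

definition bil :: "(nat \<Rightarrow> nat \<Rightarrow> nat \<Rightarrow> 'a::comm_semiring_1) \<Rightarrow> 'a tri \<Rightarrow> 'a tri \<Rightarrow> 'a tri" where
  "bil C u w = mk3 (\<lambda>k. \<Sum>i<3. \<Sum>j<3. C k i j * comp3 u i * comp3 w j)"

lemma quadmap_bil: "quadmap C v = bil C v v"
  by (simp add: quadmap_def bil_def)

lemma bil_add1: "bil C (u + u') w = bil C u w + bil C u' (w :: 'a::comm_semiring_1 tri)"
  by (simp add: bil_def mk3_add comp3_add algebra_simps sum.distrib)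

lemma bil_add2: "bil C w (u + u') = bil C w u + bil C w (u' :: 'a::comm_semiring_1 tri)"
  by (simp add: bil_def mk3_add comp3_add algebra_simps sum.distrib)

lemma bil_smult1: "bil C (smult3 c u) w = smult3 c (bil C u (w :: 'a::comm_semiring_1 tri))"
  by (simp add: bil_def smult3_mk3 comp3_smult sum_distrib_left algebra_simps)

lemma bil_smult2: "bil C w (smult3 c u) = smult3 c (bil C w (u :: 'a::comm_semiring_1 tri))"
  by (simp add: bil_def smult3_mk3 comp3_smult sum_distrib_left algebra_simps)

definition pol :: "(nat \<Rightarrow> nat \<Rightarrow> nat \<Rightarrow> 'a::comm_semiring_1) \<Rightarrow> 'a tri \<Rightarrow> 'a tri \<Rightarrow> 'a tri" where
  "pol C u w = bil C u w + bil C w u"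

lemma pol_sym: "pol C u w = pol C w u"
  by (simp add: pol_def add.commute)

definition lin3 :: "'a::comm_semiring_1 tri \<Rightarrow> 'a tri \<Rightarrow> 'a tri \<Rightarrow> 'a tri \<Rightarrow> 'a tri" where
  "lin3 a b c x = smult3 (comp3 x 0) a + smult3 (comp3 x 1) b + smult3 (comp3 x 2) c"

lemma quadmap_lin3:
  fixes a b c :: "'a::comm_ring_1 tri"
  assumes "quadmap C a = (0, 0, 0)" "quadmap C b = (0, 0, 0)" "quadmap C c = (0, 0, 0)"
  shows "quadmap C (lin3 a b c (x0, x1, x2)) =
    smult3 (x1 * x2) (pol C b c) + smult3 (x0 * x2) (pol C a c) + smult3 (x0 * x1) (pol C a b)"
  using assms
  by (simp add: lin3_def quadmap_bil pol_def bil_add1 bil_add2 bil_smult1 bil_smult2 smult3_add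
      zero_tri[symmetric] algebra_simps)

definition adj3 :: "(nat \<Rightarrow> nat \<Rightarrow> 'a::comm_ring_1) \<Rightarrow> nat \<Rightarrow> nat \<Rightarrow> 'a" where
  "adj3 M i j = M ((j+1) mod 3) ((i+1) mod 3) * M ((j+2) mod 3) ((i+2) mod 3)
              - M ((j+1) mod 3) ((i+2) mod 3) * M ((j+2) mod 3) ((i+1) mod 3)"

lemma linmap_eq: "linmap M (x, y, z) =
  (M 0 0 * x + M 0 1 * y + M 0 2 * z, M 1 0 * x + M 1 1 * y + M 1 2 * z, M 2 0 * x + M 2 1 * y + M 2 2 * z)"
  by (simp add: linmap_def mk3_eq sum3)

lemma adj3_left: "linmap (adj3 M) (linmap M v) = smult3 (det3 M) (v :: 'a::comm_ring_1 tri)"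
proof (cases v)
  case (fields x y z)
  show ?thesis unfolding fields linmap_eq
    by (simp add: adj3_def det3_def numeral_2_eq_2 algebra_simps)
qed

lemma adj3_right: "linmap M (linmap (adj3 M) v) = smult3 (det3 M) (v :: 'a::comm_ring_1 tri)"
proof (cases v)
  case (fields x y z)
  show ?thesis unfolding fields linmap_eq
    by (simp add: adj3_def det3_def numeral_2_eq_2 algebra_simps)
qed

lemma linmap_add: "linmap M (u + w) = linmap M u + linmap M (w :: 'a::comm_semiring_1 tri)"
  by (cases u; cases w) (simp add: linmap_eq algebra_simps)

lemma linmap_smult: "linmap M (smult3 c u) = smult3 c (linmap M (u :: 'a::comm_semiring_1 tri))"
  by (cases u) (simp add: linmap_eq algebra_simps)

lemma linmap_zero: "linmap M (0, 0, 0) = (0, 0, (0 :: 'a::comm_semiring_1))"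
  by (simp add: linmap_eq)

lemma linmap_inj0:
  assumes "det3 M \<noteq> 0" "linmap M v = (0, 0, 0)"
  shows "v = (0, 0, (0 :: 'a::field))"
proof -
  have "smult3 (det3 M) v = (0, 0, 0)" using adj3_left[of M v] assms(2) linmap_zero by metis
  then show ?thesis using assms(1) by (simp add: smult3_eq_0)
qed

lemma linmap_inj:
  assumes "det3 M \<noteq> 0"
  shows "inj (linmap (M :: nat \<Rightarrow> nat \<Rightarrow> 'a::field))"
proof (rule injI)
  fix u w assume "linmap M u = linmap M w"
  then have "linmap M (u - w) = (0, 0, 0)"
    by (cases u; cases w) (simp add: linmap_eq algebra_simps)
  then have "u - w = (0, 0, 0)" using linmap_inj0[OF assms] by blast
  then show "u = w" by (cases u; cases w) simp
qed

lemma stdquad_eq: "stdquad (x, y, z) = (y * z, x * z, x * y)"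
  by (simp add: stdquad_def)


definition map3 :: "('a \<Rightarrow> 'b) \<Rightarrow> 'a tri \<Rightarrow> 'b tri" where
  "map3 f v = (case v of (x, y, z) \<Rightarrow> (f x, f y, f z))"

lemma map3_simp [simp]: "map3 f (x, y, z) = (f x, f y, f z)"
  by (simp add: map3_def)

definition par3 :: "'a::field tri \<Rightarrow> 'a tri \<Rightarrow> bool" where
  "par3 v w \<longleftrightarrow> (\<exists>c. c \<noteq> 0 \<and> w = smult3 c v)"

lemma lin3_add: "lin3 a b c (x + y) = lin3 a b c x + lin3 a b c (y :: 'a::comm_semiring_1 tri)"
  by (simp add: lin3_def comp3_add smult3_add_left algebra_simps)

lemma lin3_smult: "lin3 a b c (smult3 k x) = smult3 k (lin3 a b c (x :: 'a::comm_semiring_1 tri))"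
  by (simp add: lin3_def comp3_smult smult3_add)

lemma tri_double: "(2::'a::comm_ring_1) = 0 \<Longrightarrow> v + v = (0::'a tri)"
  by (cases v) (simp add: char2_double zero_tri)

locale qt =
  fixes C :: "nat \<Rightarrow> nat \<Rightarrow> nat \<Rightarrow> 'a::{field,finite}" and m :: nat
    and A B :: "nat \<Rightarrow> nat \<Rightarrow> 'a alg_closure"
  assumes m1: "m \<ge> 1" and card: "card (UNIV :: 'a set) = 2 ^ m"
    and detA: "det3 A \<noteq> 0" and detB: "det3 B \<noteq> 0"
    and fact: "\<And>v. quadmap (lift_coeffs C) v = linmap A (stdquad (linmap B v))"
    and nozero: "\<And>v::'a tri. v \<noteq> (0, 0, 0) \<Longrightarrow> quadmap C v \<noteq> (0, 0, 0)"
begin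

abbreviation q :: nat where "q \<equiv> 2 ^ m"

definition fr :: "'a alg_closure \<Rightarrow> 'a alg_closure" where "fr x = x ^ q"

lemma two_a: "(2::'a) = 0" using char2_of_card[OF card m1] .
lemma two_K: "(2::'a alg_closure) = 0" using ac_char2[OF two_a] .

lemma q_pos: "q > 0" by simp

lemma q_ge2: "q \<ge> 2"
  using power_increasing[OF m1, of "2::nat"] by simp

lemma fr_add: "fr (x + y) = fr x + fr y"
  unfolding fr_def by (rule char2_pow2_add[OF two_K])

lemma fr_mult: "fr (x * y) = fr x * fr y"
  unfolding fr_def by (simp add: power_mult_distrib)

lemma fr_0 [simp]: "fr 0 = 0" unfolding fr_def by simp
lemma fr_1 [simp]: "fr 1 = 1" unfolding fr_def by simp

lemma fr_inj: "fr x = fr y \<Longrightarrow> x = y"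
  unfolding fr_def by (rule char2_pow2_inj[OF two_K])

lemma fr_eq_0: "fr x = 0 \<longleftrightarrow> x = 0"
  using fr_inj fr_0 by metis

lemma fr_surj: "\<exists>y. fr y = x"
  unfolding fr_def using nth_root_exists[OF q_pos] by blast

lemma fr_to_ac [simp]: "fr (to_ac a) = to_ac a"
  unfolding fr_def using fermat_finite_field[of a] card by (simp del: to_ac_power add: to_ac_power[symmetric])

lemma fr_fixed: "fr x = x \<longleftrightarrow> x \<in> range to_ac"
  unfolding fr_def using fixed_field[OF card] .

lemma fr_inverse: "fr (inverse x) = inverse (fr x)"
  unfolding fr_def by (simp add: power_inverse)

lemma fr_neg: "fr (- x) = - fr x"
  using char2_neg[OF two_K] by metis

lemma fr_diff: "fr (x - y) = fr x - fr y"
  using char2_diff[OF two_K] fr_add by metis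

definition fr3 :: "'a alg_closure tri \<Rightarrow> 'a alg_closure tri" where "fr3 = map3 fr"

definition to3 :: "'a tri \<Rightarrow> 'a alg_closure tri" where "to3 = map3 to_ac"

lemma fr3_simp [simp]: "fr3 (x, y, z) = (fr x, fr y, fr z)" by (simp add: fr3_def)
lemma to3_simp [simp]: "to3 (x, y, z) = (to_ac x, to_ac y, to_ac z)" by (simp add: to3_def)

lemma fr3_add: "fr3 (u + w) = fr3 u + fr3 w"
  by (cases u; cases w) (simp add: fr_add)

lemma fr3_smult: "fr3 (smult3 c v) = smult3 (fr c) (fr3 v)"
  by (cases v) (simp add: fr_mult)

lemma fr3_zero [simp]: "fr3 (0, 0, 0) = (0, 0, 0)" by simp

lemma fr3_inj: "fr3 v = fr3 w \<Longrightarrow> v = w"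
  by (cases v; cases w) (auto dest: fr_inj)

lemma fr3_eq_0: "fr3 v = (0, 0, 0) \<longleftrightarrow> v = (0, 0, 0)"
  using fr3_inj fr3_zero by metis

lemma fr3_to3 [simp]: "fr3 (to3 v) = to3 v" by (cases v) simp

lemma to3_inj: "to3 v = to3 w \<Longrightarrow> v = w" by (cases v; cases w) simp

lemma to3_eq_0: "to3 v = (0, 0, 0) \<longleftrightarrow> v = (0, 0, 0)" by (cases v) simp

lemma fr3_fixed: "fr3 v = v \<longleftrightarrow> v \<in> range to3"
proof
  assume "fr3 v = v"
  then obtain x y z where v: "v = (x, y, z)" "fr x = x" "fr y = y" "fr z = z" by (cases v) auto
  then obtain a b c where "x = to_ac a" "y = to_ac b" "z = to_ac c" using fr_fixed by blast
  then have "v = to3 (a, b, c)" using v by simp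
  then show "v \<in> range to3" by blast
qed auto

definition QC :: "'a alg_closure tri \<Rightarrow> 'a alg_closure tri" where
  "QC = quadmap (lift_coeffs C)"

lemma QC_expand: "QC (x, y, z) = mk3 (\<lambda>k.
   to_ac (C k 0 0) * x * x + to_ac (C k 0 1) * x * y + to_ac (C k 0 2) * x * z +
  (to_ac (C k 1 0) * y * x + to_ac (C k 1 1) * y * y + to_ac (C k 1 2) * y * z) +
  (to_ac (C k 2 0) * z * x + to_ac (C k 2 1) * z * y + to_ac (C k 2 2) * z * z))"
  by (simp add: QC_def quadmap_def sum3 lift_coeffs_def)

lemma QC_fr: "fr3 (QC v) = QC (fr3 v)"
  by (cases v) (simp add: QC_expand mk3_eq fr_add fr_mult)

lemma QC_to3: "QC (to3 v) = to3 (quadmap C v)"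
  by (cases v) (simp add: QC_expand mk3_eq quadmap_def sum3)

lemma QC_smult: "QC (smult3 c v) = smult3 (c * c) (QC v)"
  by (simp add: QC_def quadmap_bil bil_smult1 bil_smult2)

lemma QC_rat: "v \<noteq> (0, 0, 0) \<Longrightarrow> fr3 v = v \<Longrightarrow> QC v \<noteq> (0, 0, 0)"
proof -
  assume "v \<noteq> (0, 0, 0)" "fr3 v = v"
  then obtain w where w: "v = to3 w" using fr3_fixed by blast
  then have "w \<noteq> (0, 0, 0)" using \<open>v \<noteq> (0, 0, 0)\<close> by auto
  then have "quadmap C w \<noteq> (0, 0, 0)" by (rule nozero)
  then show "QC v \<noteq> (0, 0, 0)" using w QC_to3 to3_eq_0 by metis
qed

lemma QC_eig:
  assumes "v \<noteq> (0, 0, 0)" "fr3 v = smult3 l v"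
  shows "QC v \<noteq> (0, 0, 0)"
proof
  assume Q0: "QC v = (0, 0, 0)"
  have "fr3 v \<noteq> (0, 0, 0)" using assms(1) fr3_eq_0 by blast
  then have l0: "l \<noteq> 0" using assms(2) by auto
  have "q - 1 > 0" using q_ge2 by simp
  then obtain \<mu> where mu: "\<mu> ^ (q - 1) = inverse l" using nth_root_exists by blast
  then have mu0: "\<mu> \<noteq> 0" using l0 \<open>q - 1 > 0\<close> by (metis inverse_zero_imp_zero power_0_left not_gr0)
  have "fr \<mu> = \<mu> * \<mu> ^ (q - 1)" unfolding fr_def using q_pos
    by (metis Suc_diff_1 power_Suc)
  then have frmu: "fr \<mu> = \<mu> * inverse l" using mu by simp
  have "fr3 (smult3 \<mu> v) = smult3 \<mu> v"
  proof -
    have "\<mu> * inverse l * l = \<mu>" using l0 by (simp add: field_simps)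
    have "fr3 (smult3 \<mu> v) = smult3 (\<mu> * inverse l * l) v" using frmu by (simp add: fr3_smult assms(2))
    then show ?thesis by (simp only: \<open>\<mu> * inverse l * l = \<mu>\<close>)
  qed
  moreover have "smult3 \<mu> v \<noteq> (0, 0, 0)" using mu0 assms(1) by (simp add: smult3_eq_0)
  ultimately have "QC (smult3 \<mu> v) \<noteq> (0, 0, 0)" by (rule QC_rat[rotated])
  then show False using Q0 by (simp add: QC_smult)
qed

definition Bm :: "'a alg_closure tri \<Rightarrow> 'a alg_closure tri" where "Bm = linmap B"

definition ax :: "nat \<Rightarrow> 'a alg_closure tri \<Rightarrow> bool" where
  "ax j v \<longleftrightarrow> (\<exists>a. a \<noteq> 0 \<and> ((j = 0 \<and> Bm v = (a, 0, 0)) \<or> (j = 1 \<and> Bm v = (0, a, 0)) \<or> (j = 2 \<and> Bm v = (0, 0, a))))"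

lemma Bm_inj: "Bm v = Bm w \<Longrightarrow> v = w"
  using linmap_inj[OF detB] unfolding Bm_def by (meson injD)

lemma Bm_zero: "Bm (0, 0, 0) = (0, 0, 0)"
  unfolding Bm_def by (rule linmap_zero)

lemma Bm_smult: "Bm (smult3 c v) = smult3 c (Bm v)"
  unfolding Bm_def by (rule linmap_smult)

lemma Bm_add: "Bm (u + w) = Bm u + Bm w"
  unfolding Bm_def by (rule linmap_add)

lemma QC_zero_iff: "QC v = (0, 0, 0) \<longleftrightarrow> stdquad (Bm v) = (0, 0, 0)"
proof
  assume "QC v = (0, 0, 0)"
  then have "linmap A (stdquad (Bm v)) = (0, 0, 0)" using fact by (simp add: QC_def Bm_def)
  then show "stdquad (Bm v) = (0, 0, 0)" using linmap_inj0[OF detA] by blast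
next
  assume "stdquad (Bm v) = (0, 0, 0)"
  then show "QC v = (0, 0, 0)" using fact linmap_zero by (metis QC_def Bm_def)
qed

lemma ax_Z: 
  assumes "v \<noteq> (0, 0, 0)" "QC v = (0, 0, 0)"
  shows "\<exists>j. ax j v"
proof -
  obtain x y z where xyz: "Bm v = (x, y, z)" by (cases "Bm v") auto
  have nz: "(x, y, z) \<noteq> (0, 0, 0)" using assms(1) xyz Bm_zero Bm_inj by metis
  have "stdquad (x, y, z) = (0, 0, 0)" using assms(2) QC_zero_iff xyz by simp
  then have e: "y * z = 0" "x * z = 0" "x * y = 0" by (simp_all add: stdquad_eq)
  show ?thesis
  proof (cases "x = 0")
    case x: True
    show ?thesis
    proof (cases "y = 0")
      case True
      then have "z \<noteq> 0" using nz x by simp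
      then show ?thesis using x True xyz unfolding ax_def by blast
    next
      case False
      then have "z = 0" using e by simp
      then show ?thesis using x False xyz unfolding ax_def by blast
    qed
  next
    case False
    then have "y = 0" "z = 0" using e by simp_all
    then show ?thesis using False xyz unfolding ax_def by blast
  qed
qed

lemma ax_lt: "ax j v \<Longrightarrow> j = 0 \<or> j = 1 \<or> j = 2"
  unfolding ax_def by blast

lemma ax_nz: "ax j v \<Longrightarrow> v \<noteq> (0, 0, 0)"
  unfolding ax_def using Bm_zero by auto

lemma ax_QC: "ax j v \<Longrightarrow> QC v = (0, 0, 0)"
  unfolding ax_def QC_zero_iff by (auto simp: stdquad_eq)

lemma ax_par: 
  assumes "ax j v" "ax j w"
  shows "par3 v w"
proof -
  obtain a where a: "a \<noteq> 0" "(j = 0 \<and> Bm v = (a, 0, 0)) \<or> (j = 1 \<and> Bm v = (0, a, 0)) \<or> (j = 2 \<and> Bm v = (0, 0, a))"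
    using assms(1) unfolding ax_def by blast
  obtain b where b: "b \<noteq> 0" "(j = 0 \<and> Bm w = (b, 0, 0)) \<or> (j = 1 \<and> Bm w = (0, b, 0)) \<or> (j = 2 \<and> Bm w = (0, 0, b))"
    using assms(2) unfolding ax_def by blast
  have "Bm w = smult3 (b / a) (Bm v)" using a b by auto
  then have "w = smult3 (b / a) v" using Bm_smult Bm_inj by metis
  then show ?thesis unfolding par3_def using a(1) b(1) by (intro exI[of _ "b / a"]) simp
qed

lemma ax_smult: 
  assumes "ax j v" "c \<noteq> 0"
  shows "ax j (smult3 c v)"
proof -
  obtain a where a: "a \<noteq> 0" "(j = 0 \<and> Bm v = (a, 0, 0)) \<or> (j = 1 \<and> Bm v = (0, a, 0)) \<or> (j = 2 \<and> Bm v = (0, 0, a))"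
    using assms(1) unfolding ax_def by blast
  have "c * a \<noteq> 0" using a(1) assms(2) by simp
  moreover have "(j = 0 \<and> Bm (smult3 c v) = (c * a, 0, 0)) \<or> (j = 1 \<and> Bm (smult3 c v) = (0, c * a, 0)) \<or> (j = 2 \<and> Bm (smult3 c v) = (0, 0, c * a))"
    using a(2) by (auto simp: Bm_smult)
  ultimately show ?thesis unfolding ax_def by blast
qed

lemma ax_par_ax: "ax j v \<Longrightarrow> par3 v w \<Longrightarrow> ax j w"
  unfolding par3_def using ax_smult by blast

lemma ax_unique: "ax i v \<Longrightarrow> ax j v \<Longrightarrow> i = j"
  unfolding ax_def by auto

lemma ax_exists: "j = 0 \<or> j = 1 \<or> j = 2 \<Longrightarrow> \<exists>u. ax j u"
proof -
  assume j: "j = 0 \<or> j = 1 \<or> j = 2"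
  define e :: "'a alg_closure tri" where "e = (if j = 0 then (1, 0, 0) else if j = 1 then (0, 1, 0) else (0, 0, 1))"
  define u where "u = linmap (adj3 B) e"
  have "Bm u = smult3 (det3 B) e" unfolding u_def Bm_def by (rule adj3_right)
  then have "ax j u" using j detB unfolding ax_def e_def by auto
  then show ?thesis by blast
qed

lemma par3_sym: "par3 v w \<Longrightarrow> par3 w (v :: 'b::field tri)"
proof -
  assume "par3 v w"
  then obtain c where c: "c \<noteq> 0" "w = smult3 c v" unfolding par3_def by blast
  then have "smult3 (inverse c) w = v" by simp
  then show "par3 w v" unfolding par3_def using c(1) by (intro exI[of _ "inverse c"]) simp
qed

lemma par3_fr: "par3 v w \<Longrightarrow> par3 (fr3 v) (fr3 w)"
proof -
  assume "par3 v w"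
  then obtain c where c: "c \<noteq> 0" "w = smult3 c v" unfolding par3_def by blast
  then have "fr3 w = smult3 (fr c) (fr3 v)" "fr c \<noteq> 0" using fr3_smult fr_eq_0 by auto
  then show ?thesis unfolding par3_def by blast
qed

lemma par3_fr_rev: "par3 (fr3 v) (fr3 w) \<Longrightarrow> par3 v w"
proof -
  assume "par3 (fr3 v) (fr3 w)"
  then obtain c where c: "c \<noteq> 0" "fr3 w = smult3 c (fr3 v)" unfolding par3_def by blast
  obtain d where d: "fr d = c" using fr_surj by blast
  then have "fr3 w = fr3 (smult3 d v)" using c fr3_smult by simp
  then have "w = smult3 d v" by (rule fr3_inj)
  moreover have "d \<noteq> 0" using c d by auto
  ultimately show "par3 v w" unfolding par3_def by blast
qed

lemma ax_fr: "ax j v \<Longrightarrow> \<exists>j'. ax j' (fr3 v)"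
proof -
  assume "ax j v"
  then have "QC v = (0, 0, 0)" "v \<noteq> (0, 0, 0)" using ax_QC ax_nz by auto
  then have "QC (fr3 v) = (0, 0, 0)" using QC_fr[of v] by simp
  moreover have "fr3 v \<noteq> (0, 0, 0)" using \<open>v \<noteq> (0, 0, 0)\<close> fr3_eq_0 by blast
  ultimately show ?thesis using ax_Z by blast
qed

lemma ax_fr_ne: "ax j v \<Longrightarrow> \<not> ax j (fr3 v)"
proof
  assume "ax j v" "ax j (fr3 v)"
  then obtain c where "c \<noteq> 0" "fr3 v = smult3 c v" using ax_par unfolding par3_def by blast
  then have "QC v \<noteq> (0, 0, 0)" using QC_eig ax_nz \<open>ax j v\<close> by blast
  then show False using ax_QC \<open>ax j v\<close> by blast
qed

lemma ax_par_eq: "ax i v \<Longrightarrow> ax j w \<Longrightarrow> par3 v w \<Longrightarrow> i = j"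
  using ax_par_ax ax_unique by blast

lemma fr3_iter: "fr (fr (fr x)) = x ^ (q ^ 3)"
  unfolding fr_def by (simp add: power_mult[symmetric] power3_eq_cube)

lemma cycle:
  obtains b j1 j2 where "fr3 (fr3 (fr3 b)) = b" "ax 0 b" "ax j1 (fr3 b)" "ax j2 (fr3 (fr3 b))"
    "j1 \<noteq> 0" "j2 \<noteq> 0" "j1 \<noteq> j2"
proof -
  obtain b0 where b0: "ax 0 b0" using ax_exists by blast
  obtain j1 where j1: "ax j1 (fr3 b0)" using ax_fr[OF b0] by blast
  have j10: "j1 \<noteq> 0" using ax_fr_ne[OF b0] j1 by metis
  obtain j2 where j2: "ax j2 (fr3 (fr3 b0))" using ax_fr[OF j1] by blast
  have j21: "j2 \<noteq> j1" using ax_fr_ne[OF j1] j2 by metis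
  have j20: "j2 \<noteq> 0"
  proof
    assume j2z: "j2 = 0"
    define k where "k = 3 - j1"
    have k: "k = 0 \<or> k = 1 \<or> k = 2" "k \<noteq> 0" "k \<noteq> j1" using ax_lt[OF j1] j10 by (auto simp: k_def)
    obtain uk where uk: "ax k uk" using ax_exists k(1) by blast
    obtain j' where j': "ax j' (fr3 uk)" using ax_fr[OF uk] by blast
    have "j' \<noteq> k" using ax_fr_ne[OF uk] j' by metis
    moreover have "j' \<noteq> 0"
    proof
      assume "j' = 0"
      then have "par3 (fr3 uk) (fr3 (fr3 b0))" using ax_par j' j2 j2z by blast
      then have "par3 uk (fr3 b0)" by (rule par3_fr_rev)
      then have "k = j1" using ax_par_eq uk j1 by blast
      then show False using k by blast
    qed
    moreover have "j' \<noteq> j1"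
    proof
      assume "j' = j1"
      then have "par3 (fr3 uk) (fr3 b0)" using ax_par j' j1 by blast
      then have "par3 uk b0" by (rule par3_fr_rev)
      then have "k = 0" using ax_par_eq uk b0 by blast
      then show False using k by blast
    qed
    ultimately show False using ax_lt[OF j'] ax_lt[OF j1] k j10 by auto
  qed
  obtain j3 where j3: "ax j3 (fr3 (fr3 (fr3 b0)))" using ax_fr[OF j2] by blast
  have j32: "j3 \<noteq> j2" using ax_fr_ne[OF j2] j3 by metis
  have j31: "j3 \<noteq> j1"
  proof
    assume "j3 = j1"
    then have "par3 (fr3 b0) (fr3 (fr3 (fr3 b0)))" using ax_par j1 j3 by blast
    then have "par3 b0 (fr3 (fr3 b0))" by (rule par3_fr_rev)
    then have "0 = j2" using ax_par_eq b0 j2 by blast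
    then show False using j20 by simp
  qed
  have "j3 = 0" using ax_lt[OF j1] ax_lt[OF j2] ax_lt[OF j3] j10 j20 j21 j31 j32 by auto
  then have "par3 b0 (fr3 (fr3 (fr3 b0)))" using ax_par b0 j3 by blast
  then obtain l where l: "l \<noteq> 0" "fr3 (fr3 (fr3 b0)) = smult3 l b0" unfolding par3_def by blast
  have "(2::nat) ^ 3 \<le> q ^ 3" using q_ge2 by (rule power_mono) simp
  then have "q ^ 3 - 1 > 0" by simp
  then obtain \<mu> where mu: "\<mu> ^ (q ^ 3 - 1) = inverse l" using nth_root_exists by blast
  have mu0: "\<mu> \<noteq> 0"
  proof
    assume "\<mu> = 0"
    then have "\<mu> ^ (q ^ 3 - 1) = 0" using \<open>q ^ 3 - 1 > 0\<close> by simp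
    then have "inverse l = 0" using mu by metis
    then show False using l(1) by simp
  qed
  obtain n where n: "q ^ 3 = Suc n" using \<open>q ^ 3 - 1 > 0\<close> by (cases "q ^ 3") auto
  have "\<mu> ^ (q ^ 3) = \<mu> * \<mu> ^ (q ^ 3 - 1)" unfolding n by simp
  then have "fr (fr (fr \<mu>)) = \<mu> * inverse l" using mu by (simp only: fr3_iter)
  then have frmu: "fr (fr (fr \<mu>)) * l = \<mu>" using l(1) by simp
  define b where "b = smult3 \<mu> b0"
  have "fr3 (fr3 (fr3 b)) = smult3 (fr (fr (fr \<mu>))) (fr3 (fr3 (fr3 b0)))"
    unfolding b_def by (simp add: fr3_smult)
  also have "\<dots> = smult3 (fr (fr (fr \<mu>)) * l) b0" using l(2) by simp
  also have "\<dots> = b" using frmu b_def by simp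
  finally have "fr3 (fr3 (fr3 b)) = b" .
  moreover have "ax 0 b" using ax_smult[OF b0 mu0] b_def by simp
  moreover have "ax j1 (fr3 b)" using ax_smult[OF j1, of "fr \<mu>"] mu0 fr_eq_0 b_def by (simp add: fr3_smult)
  moreover have "ax j2 (fr3 (fr3 b))" using ax_smult[OF j2, of "fr (fr \<mu>)"] mu0 fr_eq_0 b_def by (simp add: fr3_smult)
  ultimately show ?thesis using that j10 j20 j21 by blast
qed

lemma bil_expand: "bil (lift_coeffs C) (x, y, z) (x', y', z') = mk3 (\<lambda>k.
   to_ac (C k 0 0) * x * x' + to_ac (C k 0 1) * x * y' + to_ac (C k 0 2) * x * z' +
  (to_ac (C k 1 0) * y * x' + to_ac (C k 1 1) * y * y' + to_ac (C k 1 2) * y * z') +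
  (to_ac (C k 2 0) * z * x' + to_ac (C k 2 1) * z * y' + to_ac (C k 2 2) * z * z'))"
  by (simp add: bil_def sum3 lift_coeffs_def)

lemma bil_fr: "fr3 (bil (lift_coeffs C) u w) = bil (lift_coeffs C) (fr3 u) (fr3 w)"
  by (cases u; cases w) (simp add: bil_expand mk3_eq fr_add fr_mult)

lemma pol_fr: "fr3 (pol (lift_coeffs C) u w) = pol (lift_coeffs C) (fr3 u) (fr3 w)"
  by (simp add: pol_def fr3_add bil_fr)

lemma Bm_lin3: "Bm (lin3 a b c x) = lin3 (Bm a) (Bm b) (Bm c) x"
  by (simp add: lin3_def Bm_add Bm_smult)

lemma fr3_lin3: "fr3 (lin3 a b c (x0, x1, x2)) = lin3 (fr3 a) (fr3 b) (fr3 c) (fr x0, fr x1, fr x2)"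
  by (simp add: lin3_def fr3_add fr3_smult)

end

locale qt2 = qt +
  fixes b :: "'a alg_closure tri" and j1 j2 :: nat
  assumes b3: "fr3 (fr3 (fr3 b)) = b" and axb0: "ax 0 b" and axb1: "ax j1 (fr3 b)"
    and axb2: "ax j2 (fr3 (fr3 b))" and j10: "j1 \<noteq> 0" and j20: "j2 \<noteq> 0" and j12: "j1 \<noteq> j2"
begin

abbreviation b1 where "b1 \<equiv> fr3 b"
abbreviation b2 where "b2 \<equiv> fr3 (fr3 b)"

definition G :: "'a alg_closure tri \<Rightarrow> 'a alg_closure tri" where "G = lin3 b b1 b2"

lemma j_cases: "(j1 = 1 \<and> j2 = 2) \<or> (j1 = 2 \<and> j2 = 1)"
  using ax_lt[OF axb1] ax_lt[OF axb2] j10 j20 j12 by auto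

lemma BmG: "\<exists>\<alpha> \<beta> \<gamma>. \<alpha> \<noteq> 0 \<and> \<beta> \<noteq> 0 \<and> \<gamma> \<noteq> 0 \<and>
   ((\<forall>x0 x1 x2. Bm (G (x0, x1, x2)) = (\<alpha> * x0, \<beta> * x1, \<gamma> * x2)) \<or>
    (\<forall>x0 x1 x2. Bm (G (x0, x1, x2)) = (\<alpha> * x0, \<gamma> * x2, \<beta> * x1)))"
proof -
  obtain \<alpha> where a: "\<alpha> \<noteq> 0" "Bm b = (\<alpha>, 0, 0)" using axb0 unfolding ax_def by auto
  show ?thesis
  proof (cases "j1 = 1")
    case True
    then have j2: "j2 = 2" using j_cases by auto
    obtain \<beta> where be: "\<beta> \<noteq> 0" "Bm b1 = (0, \<beta>, 0)" using axb1 True unfolding ax_def by auto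
    obtain \<gamma> where ga: "\<gamma> \<noteq> 0" "Bm b2 = (0, 0, \<gamma>)" using axb2 j2 unfolding ax_def by auto
    have "\<forall>x0 x1 x2. Bm (G (x0, x1, x2)) = (\<alpha> * x0, \<beta> * x1, \<gamma> * x2)"
      by (simp only: G_def Bm_lin3) (simp add: a be ga lin3_def mult.commute)
    then show ?thesis using a be ga by blast
  next
    case False
    then have j: "j1 = 2" "j2 = 1" using j_cases by auto
    obtain \<beta> where be: "\<beta> \<noteq> 0" "Bm b1 = (0, 0, \<beta>)" using axb1 j unfolding ax_def by auto
    obtain \<gamma> where ga: "\<gamma> \<noteq> 0" "Bm b2 = (0, \<gamma>, 0)" using axb2 j unfolding ax_def by auto
    have "\<forall>x0 x1 x2. Bm (G (x0, x1, x2)) = (\<alpha> * x0, \<gamma> * x2, \<beta> * x1)"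
      by (simp only: G_def Bm_lin3) (simp add: a be ga lin3_def mult.commute)
    then show ?thesis using a be ga by blast
  qed
qed

lemma G_inj: "G x = G y \<Longrightarrow> x = y"
proof -
  assume e: "G x = G y"
  obtain x0 x1 x2 where x: "x = (x0, x1, x2)" by (cases x) auto
  obtain y0 y1 y2 where y: "y = (y0, y1, y2)" by (cases y) auto
  obtain \<alpha> \<beta> \<gamma> where abc: "\<alpha> \<noteq> 0" "\<beta> \<noteq> 0" "\<gamma> \<noteq> 0"
    "(\<forall>x0 x1 x2. Bm (G (x0, x1, x2)) = (\<alpha> * x0, \<beta> * x1, \<gamma> * x2)) \<or>
     (\<forall>x0 x1 x2. Bm (G (x0, x1, x2)) = (\<alpha> * x0, \<gamma> * x2, \<beta> * x1))" using BmG by blast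
  have "Bm (G (x0, x1, x2)) = Bm (G (y0, y1, y2))" using e x y by simp
  then show "x = y" using abc x y by auto
qed

lemma G_onto: "\<exists>x. G x = v"
proof -
  obtain \<alpha> \<beta> \<gamma> where abc: "\<alpha> \<noteq> 0" "\<beta> \<noteq> 0" "\<gamma> \<noteq> 0"
    "(\<forall>x0 x1 x2. Bm (G (x0, x1, x2)) = (\<alpha> * x0, \<beta> * x1, \<gamma> * x2)) \<or>
     (\<forall>x0 x1 x2. Bm (G (x0, x1, x2)) = (\<alpha> * x0, \<gamma> * x2, \<beta> * x1))" using BmG by blast
  obtain p1 p2 p3 where p: "Bm v = (p1, p2, p3)" by (cases "Bm v") auto
  from abc(4) show ?thesis
  proof
    assume h: "\<forall>x0 x1 x2. Bm (G (x0, x1, x2)) = (\<alpha> * x0, \<beta> * x1, \<gamma> * x2)"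
    have "Bm (G (p1 / \<alpha>, p2 / \<beta>, p3 / \<gamma>)) = Bm v" using h p abc(1-3) by simp
    then show ?thesis using Bm_inj by blast
  next
    assume h: "\<forall>x0 x1 x2. Bm (G (x0, x1, x2)) = (\<alpha> * x0, \<gamma> * x2, \<beta> * x1)"
    have "Bm (G (p1 / \<alpha>, p3 / \<beta>, p2 / \<gamma>)) = Bm v" using h p abc(1-3) by simp
    then show ?thesis using Bm_inj by blast
  qed
qed

definition D0 where "D0 = pol (lift_coeffs C) b1 b2"
definition D1 where "D1 = pol (lift_coeffs C) b b2"
definition D2 where "D2 = pol (lift_coeffs C) b b1"

lemma QC_G: "QC (G (x0, x1, x2)) = smult3 (x1 * x2) D0 + smult3 (x0 * x2) D1 + smult3 (x0 * x1) D2"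
  unfolding G_def D0_def D1_def D2_def QC_def
  by (rule quadmap_lin3) (use ax_QC[OF axb0] ax_QC[OF axb1] ax_QC[OF axb2] in \<open>simp_all add: QC_def\<close>)

lemma frD0: "fr3 D0 = D1"
  unfolding D0_def D1_def pol_fr b3 by (rule pol_sym)
lemma frD1: "fr3 D1 = D2"
  unfolding D1_def D2_def pol_fr b3 by (rule pol_sym)
lemma frD2: "fr3 D2 = D0"
  unfolding D2_def D0_def pol_fr by simp

lemma fr3_G: "fr3 (G (x0, x1, x2)) = G (fr x2, fr x0, fr x1)"
  unfolding G_def fr3_lin3 b3 by (simp add: lin3_def algebra_simps)


definition inF3 :: "'a alg_closure \<Rightarrow> bool" where "inF3 t \<longleftrightarrow> fr (fr (fr t)) = t"

lemma inF3_fr: "inF3 t \<Longrightarrow> inF3 (fr t)" unfolding inF3_def by simp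
lemma inF3_inverse: "inF3 t \<Longrightarrow> inF3 (inverse t)" unfolding inF3_def by (simp add: fr_inverse)
lemma inF3_add: "inF3 t \<Longrightarrow> inF3 t' \<Longrightarrow> inF3 (t + t')" unfolding inF3_def by (simp add: fr_add)
lemma inF3_diff: "inF3 t \<Longrightarrow> inF3 t' \<Longrightarrow> inF3 (t - t')" unfolding inF3_def by (simp add: fr_diff)
lemma inF3_mult: "inF3 t \<Longrightarrow> inF3 t' \<Longrightarrow> inF3 (t * t')" unfolding inF3_def by (simp add: fr_mult)
lemma inF3_to_ac: "inF3 (to_ac c)" unfolding inF3_def by simp
lemma inF3_0: "inF3 0" unfolding inF3_def by simp

definition Phi where "Phi t = G (t, fr t, fr (fr t))"
definition Psi where "Psi s = smult3 s D0 + smult3 (fr s) D1 + smult3 (fr (fr s)) D2"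
definition Nm where "Nm t = t * fr t * fr (fr t)"

lemma G_add: "G (x + y) = G x + G y" unfolding G_def by (rule lin3_add)
lemma G_smult: "G (smult3 k x) = smult3 k (G x)" unfolding G_def by (rule lin3_smult)

lemma Phi_rat: "inF3 t \<Longrightarrow> fr3 (Phi t) = Phi t"
  unfolding Phi_def inF3_def fr3_G by simp

lemma Phi_onto: "fr3 v = v \<Longrightarrow> \<exists>t. inF3 t \<and> Phi t = v"
proof -
  assume fv: "fr3 v = v"
  obtain x where x: "G x = v" using G_onto by blast
  obtain x0 x1 x2 where xx: "x = (x0, x1, x2)" by (cases x) auto
  have "G (fr x2, fr x0, fr x1) = fr3 (G (x0, x1, x2))" using fr3_G by simp
  also have "\<dots> = G (x0, x1, x2)" using fv x xx by simp
  finally have "G (fr x2, fr x0, fr x1) = G (x0, x1, x2)" .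
  then have e: "fr x2 = x0" "fr x0 = x1" "fr x1 = x2" using G_inj by auto
  then have "inF3 x0" "Phi x0 = v" unfolding inF3_def Phi_def using x xx by auto
  then show ?thesis by blast
qed

lemma Phi_inj: "Phi t = Phi t' \<Longrightarrow> t = t'"
  unfolding Phi_def using G_inj by blast

lemma Phi_add: "Phi (t + t') = Phi t + Phi t'"
  unfolding Phi_def by (simp add: G_add[symmetric] fr_add)

lemma Phi_smult: "fr c = c \<Longrightarrow> Phi (c * t) = smult3 c (Phi t)"
  unfolding Phi_def by (simp add: G_smult[symmetric] fr_mult)

lemma Phi_0: "Phi 0 = (0, 0, 0)"
  using Phi_smult[of 0 0] by simp

lemma Phi_nz: "t \<noteq> 0 \<Longrightarrow> Phi t \<noteq> (0, 0, 0)"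
  using Phi_0 Phi_inj by metis

lemma Psi_rat: "inF3 s \<Longrightarrow> fr3 (Psi s) = Psi s"
  unfolding Psi_def inF3_def by (simp add: fr3_add fr3_smult frD0 frD1 frD2 algebra_simps)

lemma Psi_add: "Psi (s + s') = Psi s + Psi s'"
  unfolding Psi_def by (simp add: fr_add smult3_add_left algebra_simps)

lemma Psi_smult: "fr c = c \<Longrightarrow> Psi (c * s) = smult3 c (Psi s)"
  unfolding Psi_def by (simp add: fr_mult smult3_add)

lemma QC_Phi: 
  assumes "inF3 t"
  shows "QC (Phi t) = Psi (fr t * fr (fr t))"
proof -
  have "fr (fr t * fr (fr t)) = t * fr (fr t)" using assms unfolding inF3_def by (simp add: fr_mult mult.commute)
  moreover have "fr (fr (fr t * fr (fr t))) = t * fr t" using assms unfolding inF3_def by (simp add: fr_mult)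
  ultimately show ?thesis unfolding Phi_def QC_G Psi_def by simp
qed

lemma Nm_fixed: "inF3 t \<Longrightarrow> fr (Nm t) = Nm t"
  unfolding inF3_def Nm_def by (simp add: fr_mult mult.commute mult.left_commute)

lemma Nm_nz: "t \<noteq> 0 \<Longrightarrow> Nm t \<noteq> 0"
  unfolding Nm_def by (simp add: fr_eq_0)

lemma QC_Phi':
  assumes "inF3 t" "t \<noteq> 0"
  shows "QC (Phi t) = smult3 (Nm t) (Psi (inverse t))"
proof -
  have "fr t * fr (fr t) = Nm t * inverse t" unfolding Nm_def using assms(2) by (simp add: field_simps)
  then show ?thesis using QC_Phi[OF assms(1)] Psi_smult[OF Nm_fixed[OF assms(1)]] by simp
qed

definition of3 :: "'a alg_closure tri \<Rightarrow> 'a tri" where "of3 = map3 of_ac"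

lemma to3_of3: "fr3 v = v \<Longrightarrow> to3 (of3 v) = v"
proof -
  assume "fr3 v = v"
  then obtain w where "v = to3 w" using fr3_fixed by blast
  then show "to3 (of3 v) = v" by (cases w) (simp add: of3_def)
qed

lemma to3_add: "to3 (u + w) = to3 u + to3 w" by (cases u; cases w) simp
lemma to3_smult: "to3 (smult3 c v) = smult3 (to_ac c) (to3 v)" by (cases v) simp

definition rho where "rho t = of3 (Phi t)"
definition rhoD where "rhoD s = of3 (Psi s)"
definition F3 where "F3 = {t. inF3 t}"

lemma to3_rho: "inF3 t \<Longrightarrow> to3 (rho t) = Phi t"
  unfolding rho_def using Phi_rat to3_of3 by blast

lemma to3_rhoD: "inF3 t \<Longrightarrow> to3 (rhoD t) = Psi t"
  unfolding rhoD_def using Psi_rat to3_of3 by blast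

lemma rho_inj: "inF3 t \<Longrightarrow> inF3 t' \<Longrightarrow> rho t = rho t' \<Longrightarrow> t = t'"
  using to3_rho Phi_inj by metis

lemma rho_bij: "bij_betw rho F3 UNIV"
proof (rule bij_betwI')
  show "\<And>x y. x \<in> F3 \<Longrightarrow> y \<in> F3 \<Longrightarrow> (rho x = rho y) = (x = y)"
    unfolding F3_def using rho_inj by blast
  show "\<And>x. x \<in> F3 \<Longrightarrow> rho x \<in> UNIV" by simp
  show "\<exists>x\<in>F3. y = rho x" for y
  proof -
    obtain t where t: "inF3 t" "Phi t = to3 y" using Phi_onto[of "to3 y"] by auto
    then have "to3 (rho t) = to3 y" using to3_rho by simp
    then have "rho t = y" by (rule to3_inj)
    then show ?thesis using t(1) unfolding F3_def by blast
  qed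
qed

lemma rho_add: "inF3 t \<Longrightarrow> inF3 t' \<Longrightarrow> rho (t + t') = rho t + rho t'"
  by (rule to3_inj) (simp add: to3_add to3_rho inF3_add Phi_add)

lemma rho_smult: "inF3 t \<Longrightarrow> rho (to_ac c * t) = smult3 c (rho t)"
  by (rule to3_inj) (simp add: to3_smult to3_rho inF3_mult inF3_to_ac Phi_smult)

lemma rho_nz: "inF3 t \<Longrightarrow> t \<noteq> 0 \<Longrightarrow> rho t \<noteq> (0, 0, 0)"
  using to3_rho Phi_nz by fastforce

lemma rhoD_add: "inF3 t \<Longrightarrow> inF3 t' \<Longrightarrow> rhoD (t + t') = rhoD t + rhoD t'"
  by (rule to3_inj) (simp add: to3_add to3_rhoD inF3_add Psi_add)

lemma rhoD_smult: "inF3 t \<Longrightarrow> rhoD (to_ac c * t) = smult3 c (rhoD t)"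
  by (rule to3_inj) (simp add: to3_smult to3_rhoD inF3_mult inF3_to_ac Psi_smult)

lemma quad_rho:
  assumes "inF3 t" "t \<noteq> 0"
  shows "quadmap C (rho t) = smult3 (of_ac (Nm t)) (rhoD (inverse t))"
proof (rule to3_inj)
  have N: "to_ac (of_ac (Nm t)) = Nm t" using Nm_fixed[OF assms(1)] fr_fixed to_ac_of_ac by blast
  have "to3 (quadmap C (rho t)) = QC (Phi t)" using QC_to3 to3_rho[OF assms(1)] by metis
  also have "\<dots> = smult3 (Nm t) (Psi (inverse t))" using QC_Phi'[OF assms] .
  also have "\<dots> = to3 (smult3 (of_ac (Nm t)) (rhoD (inverse t)))"
    using N to3_smult to3_rhoD inF3_inverse[OF assms(1)] by simp
  finally show "to3 (quadmap C (rho t)) = to3 (smult3 (of_ac (Nm t)) (rhoD (inverse t)))" .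
qed

lemma rhoD_inj:
  assumes "inF3 s" "inF3 s'" "rhoD s = rhoD s'"
  shows "s = s'"
proof (rule ccontr)
  assume ne: "s \<noteq> s'"
  define d where "d = s + s'"
  have dF: "inF3 d" using assms inF3_add d_def by blast
  have "s + s' \<noteq> 0"
  proof
    assume "s + s' = 0"
    then have "s = - s'" by (simp add: eq_neg_iff_add_eq_0)
    then show False using ne char2_neg[OF two_K] by metis
  qed
  then have d0: "d \<noteq> 0" by (simp add: d_def)
  have "Psi s = Psi s'" using assms to3_rhoD by metis
  then have "Psi d = (0, 0, 0)" unfolding d_def Psi_add using tri_double[OF two_K] zero_tri by metis
  then have rd: "rhoD d = (0, 0, 0)" unfolding rhoD_def of3_def by simp
  define t where "t = inverse d"
  have tF: "inF3 t" "t \<noteq> 0" using dF d0 inF3_inverse t_def by auto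
  have "quadmap C (rho t) = smult3 (of_ac (Nm t)) (rhoD d)" using quad_rho[OF tF] t_def by simp
  also have "\<dots> = (0, 0, 0)" using rd by simp
  finally show False using nozero rho_nz[OF tF] by blast
qed

definition sig where "sig v = the_inv_into F3 rho v"

lemma sig_F3: "inF3 (sig v)"
  using the_inv_into_into[OF bij_betw_imp_inj_on[OF rho_bij], of v] rho_bij
  unfolding sig_def F3_def bij_betw_def by auto

lemma rho_sig: "rho (sig v) = v"
  unfolding sig_def using f_the_inv_into_f_bij_betw[OF rho_bij] by simp

lemma sig_rho: "inF3 t \<Longrightarrow> sig (rho t) = t"
  using rho_inj[OF sig_F3] rho_sig by blast

lemma rho_0: "rho 0 = (0, 0, 0)"
  unfolding rho_def Phi_0 of3_def by simp

lemma sig_nz: "v \<noteq> (0, 0, 0) \<Longrightarrow> sig v \<noteq> 0"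
  using rho_sig rho_0 by metis

lemma sig_add: "sig (u + w) = sig u + sig w"
proof -
  have "rho (sig u + sig w) = u + w" using rho_add[OF sig_F3 sig_F3] rho_sig by simp
  then show ?thesis using sig_rho inF3_add[OF sig_F3 sig_F3] by metis
qed

lemma sig_smult: "sig (smult3 c u) = to_ac c * sig u"
proof -
  have "rho (to_ac c * sig u) = smult3 c u" using rho_smult[OF sig_F3] rho_sig by simp
  then show ?thesis using sig_rho inF3_mult[OF inF3_to_ac sig_F3] by metis
qed

definition Lmap where "Lmap v = rhoD (sig v)"
definition jm where "jm v = rho (inverse (sig v))"

lemma Lmap_add: "Lmap (u + w) = Lmap u + Lmap w"
  unfolding Lmap_def sig_add using rhoD_add[OF sig_F3 sig_F3] .

lemma Lmap_smult: "Lmap (smult3 c u) = smult3 c (Lmap u)"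
  unfolding Lmap_def sig_smult using rhoD_smult[OF sig_F3] .

lemma Lmap_inj: "Lmap u = Lmap w \<Longrightarrow> u = w"
  unfolding Lmap_def using rhoD_inj[OF sig_F3 sig_F3] rho_sig by metis

lemma Lmap_0: "Lmap (0, 0, 0) = (0, 0, 0)"
  using Lmap_smult[of 0 "(0, 0, 0)"] by simp

lemma Lmap_nz: "v \<noteq> (0, 0, 0) \<Longrightarrow> Lmap v \<noteq> (0, 0, 0)"
  using Lmap_0 Lmap_inj by metis

lemma jm_smult: "c \<noteq> 0 \<Longrightarrow> jm (smult3 c v) = smult3 (inverse c) (jm v)"
proof -
  assume c: "c \<noteq> 0"
  have "jm (smult3 c v) = rho (to_ac (inverse c) * inverse (sig v))"
    unfolding jm_def sig_smult using c by (simp add: field_simps)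
  also have "\<dots> = smult3 (inverse c) (jm v)" unfolding jm_def by (rule rho_smult[OF inF3_inverse[OF sig_F3]])
  finally show ?thesis .
qed

lemma jm_nz: "v \<noteq> (0, 0, 0) \<Longrightarrow> jm v \<noteq> (0, 0, 0)"
  unfolding jm_def using rho_nz inF3_inverse[OF sig_F3] sig_nz by simp

lemma jm_jm: "jm (jm v) = v"
  unfolding jm_def using sig_rho[OF inF3_inverse[OF sig_F3]] rho_sig by simp

lemma quad_L:
  assumes "v \<noteq> (0, 0, 0)"
  shows "\<exists>c. c \<noteq> 0 \<and> quadmap C v = smult3 c (Lmap (jm v))"
proof -
  define t where "t = sig v"
  have t: "inF3 t" "t \<noteq> 0" "rho t = v" using sig_F3 sig_nz[OF assms] rho_sig t_def by auto
  have "quadmap C v = smult3 (of_ac (Nm t)) (rhoD (inverse t))" using quad_rho[OF t(1,2)] t(3) by simp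
  moreover have "Lmap (jm v) = rhoD (inverse t)"
    unfolding Lmap_def jm_def t_def[symmetric] using sig_rho[OF inF3_inverse[OF t(1)]] by simp
  moreover have "of_ac (Nm t) \<noteq> 0"
  proof
    assume "of_ac (Nm t) = 0"
    then have "to_ac (of_ac (Nm t)) = 0" by simp
    moreover have "to_ac (of_ac (Nm t)) = Nm t" using Nm_fixed[OF t(1)] fr_fixed to_ac_of_ac by blast
    ultimately show False using Nm_nz[OF t(2)] by simp
  qed
  ultimately show ?thesis by metis
qed

lemma homog_jm: "homog jm"
  unfolding homog_def
proof (intro conjI allI impI)
  fix v :: "'a tri" assume "v \<noteq> (0, 0, 0)" then show "jm v \<noteq> (0, 0, 0)" by (rule jm_nz)
next
  fix c :: 'a and v :: "'a tri" assume "c \<noteq> 0"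
  then show "\<exists>d. d \<noteq> 0 \<and> jm (smult3 c v) = smult3 d (jm v)" using jm_smult by (intro exI[of _ "inverse c"]) simp
qed

lemma homog_Lmap: "homog Lmap"
  unfolding homog_def using Lmap_nz Lmap_smult by auto

lemma induced_decomp: "induced_map C = pact Lmap \<circ> pact jm"
proof -
  have "pact (quadmap C) = pact (Lmap \<circ> jm)"
    by (rule pact_cong) (use quad_L in auto)
  then show ?thesis using pact_comp[OF homog_Lmap homog_jm] induced_map_pact by metis
qed

lemma jm_permutes: "pact jm permutes P2"
proof (rule pact_permutes[OF homog_jm])
  fix v w :: "'a tri" assume "v \<noteq> (0, 0, 0)" "w \<noteq> (0, 0, 0)" "proj_pt (jm v) = proj_pt (jm w)"
  then obtain c where c: "c \<noteq> 0" "jm v = smult3 c (jm w)" using proj_pt_eq_iff by blast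
  then have "v = smult3 (inverse c) w" using jm_jm jm_smult by metis
  moreover have "inverse c \<noteq> 0" using c(1) by simp
  ultimately show "proj_pt v = proj_pt w" using proj_pt_smult by metis
qed

lemma Lmap_permutes: "pact Lmap permutes P2"
proof (rule pact_permutes[OF homog_Lmap])
  fix v w :: "'a tri" assume "v \<noteq> (0, 0, 0)" "w \<noteq> (0, 0, 0)" "proj_pt (Lmap v) = proj_pt (Lmap w)"
  then obtain c where c: "c \<noteq> 0" "Lmap v = smult3 c (Lmap w)" using proj_pt_eq_iff by blast
  then have "v = smult3 c w" using Lmap_inj Lmap_smult by metis
  then show "proj_pt v = proj_pt w" using c(1) proj_pt_smult by simp
qed

lemma pact_ident: "pact (\<lambda>v::'a tri. v) = id"
proof
  fix P :: "'a tri set"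
  show "pact (\<lambda>v. v) P = id P"
    by (cases "P \<in> P2") (simp_all add: pact_def P2_rep)
qed

lemma homog_ident: "homog (\<lambda>v::'a tri. v)"
  unfolding homog_def by auto

lemma jm_invol: "pact jm \<circ> pact jm = id"
proof -
  have "jm \<circ> jm = (\<lambda>v. v)" using jm_jm by (simp add: fun_eq_iff)
  then have "pact jm \<circ> pact jm = pact (\<lambda>v. v)" using pact_comp[OF homog_jm homog_jm] by metis
  then show ?thesis using pact_ident by simp
qed

lemma rho1: "rho 1 \<noteq> (0, 0, 0)" using rho_nz[of 1] unfolding inF3_def by simp

lemma jm_fixed:
  assumes "P \<in> P2"
  shows "pact jm P = P \<longleftrightarrow> P = proj_pt (rho 1)"
proof -
  obtain v where v: "v \<noteq> (0, 0, 0)" "P = proj_pt v" using assms by (rule P2_cases)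
  have pj: "pact jm P = proj_pt (jm v)" using pact_proj[OF homog_jm v(1)] v(2) by simp
  show ?thesis
  proof
    assume "pact jm P = P"
    then obtain c where c: "c \<noteq> 0" "jm v = smult3 c v" using pj v(2) proj_pt_eq_iff by metis
    define t where "t = sig v"
    have t: "inF3 t" "t \<noteq> 0" "rho t = v" using sig_F3 sig_nz[OF v(1)] rho_sig t_def by auto
    have "rho (inverse t) = rho (to_ac c * t)" using c(2) t(3) rho_smult[OF t(1)] unfolding jm_def t_def by simp
    then have "inverse t = to_ac c * t" using rho_inj inF3_inverse[OF t(1)] inF3_mult[OF inF3_to_ac t(1)] by blast
    then have "t ^ 2 = to_ac (inverse c)" using t(2) c(1) by (simp add: field_simps power2_eq_square)
    moreover obtain e where e: "e ^ 2 = inverse c" using square_root_finite_field[OF card m1] by blast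
    ultimately have "t ^ 2 = (to_ac e) ^ 2" by (simp del: to_ac_power add: to_ac_power[symmetric])
    then have "t = to_ac e" using char2_sq_inj[OF two_K] by blast
    then have "v = smult3 e (rho 1)" using t(3) rho_smult[of 1 e] unfolding inF3_def by simp
    moreover have "e \<noteq> 0" using e c(1) by auto
    ultimately show "P = proj_pt (rho 1)" using v(2) proj_pt_smult by simp
  next
    assume P: "P = proj_pt (rho 1)"
    have "jm (rho 1) = rho 1" unfolding jm_def using sig_rho[of 1] unfolding inF3_def by simp
    then show "pact jm P = P" using P pact_proj[OF homog_jm rho1] by simp
  qed
qed

lemma jm_moved: "{P. pact jm P \<noteq> P} = P2 - {proj_pt (rho 1)}"
  using jm_fixed pact_outside by fastforce

lemma jm_evenperm: "evenperm (pact jm) = even ((q^2 + q) div 2)"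
proof -
  have "evenperm (pact jm) = even (card {P. pact jm P \<noteq> P} div 2)"
    by (rule involution_evenperm[OF finite_P2 jm_permutes jm_invol])
  moreover have "card {P. pact jm P \<noteq> P} = q^2 + q"
    unfolding jm_moved using card_P2[OF card] proj_pt_in_P2[OF rho1] finite_P2
    by (simp add: card_Diff_singleton)
  ultimately show ?thesis by simp
qed

end


section \<open>Linear maps act by even permutations in characteristic 2\<close>

definition islin :: "('a::comm_semiring_1 tri \<Rightarrow> 'a tri) \<Rightarrow> bool" where
  "islin L \<longleftrightarrow> (\<forall>u w. L (u + w) = L u + L w) \<and> (\<forall>c u. L (smult3 c u) = smult3 c (L u))"

lemma islin_add: "islin L \<Longrightarrow> L (u + w) = L u + L w" unfolding islin_def by blast
lemma islin_smult: "islin L \<Longrightarrow> L (smult3 c u) = smult3 c (L u)" unfolding islin_def by blast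

lemma islin_0: "islin L \<Longrightarrow> L (0, 0, 0) = (0, 0, (0 :: 'a::comm_semiring_1))"
  using islin_smult[of L 0 "(0, 0, 0)"] by simp

lemma islin_comp: "islin L1 \<Longrightarrow> islin L2 \<Longrightarrow> islin (L1 \<circ> L2)"
  unfolding islin_def comp_def by metis

lemma islin_lin3: "islin (lin3 a b (c :: 'a::comm_semiring_1 tri))"
  unfolding islin_def using lin3_add lin3_smult by blast

lemma islin_homog:
  fixes L :: "'a::field tri \<Rightarrow> 'a tri"
  assumes "islin L" "inj L"
  shows "homog L"
  unfolding homog_def
proof (intro conjI allI impI)
  fix v :: "'a tri" assume "v \<noteq> (0, 0, 0)"
  then show "L v \<noteq> (0, 0, 0)" using islin_0[OF assms(1)] assms(2) by (metis injD)
next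
  fix c :: 'a and v :: "'a tri" assume "c \<noteq> 0"
  then show "\<exists>d. d \<noteq> 0 \<and> L (smult3 c v) = smult3 d (L v)" using islin_smult[OF assms(1)] by blast
qed

lemma islin_permutes:
  fixes L :: "'a::{field,finite} tri \<Rightarrow> 'a tri"
  assumes "islin L" "inj L"
  shows "pact L permutes P2"
proof (rule pact_permutes[OF islin_homog[OF assms]])
  fix v w :: "'a tri" assume "v \<noteq> (0, 0, 0)" "w \<noteq> (0, 0, 0)" "proj_pt (L v) = proj_pt (L w)"
  then obtain c where c: "c \<noteq> 0" "L v = smult3 c (L w)" using proj_pt_eq_iff by blast
  then have "v = smult3 c w" using assms islin_smult by (metis injD)
  then show "proj_pt v = proj_pt w" using c(1) proj_pt_smult by simp
qed

lemma evenperm_lin_comp: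
  fixes L1 L2 :: "'a::{field,finite} tri \<Rightarrow> 'a tri"
  assumes "islin L1" "inj L1" "islin L2" "inj L2"
  shows "evenperm (pact (L1 \<circ> L2)) = (evenperm (pact L1) = evenperm (pact L2))"
proof -
  have "pact (L1 \<circ> L2) = pact L1 \<circ> pact L2" by (rule pact_comp[OF islin_homog[OF assms(1,2)] islin_homog[OF assms(3,4)]])
  moreover have "permutation (pact L1)" "permutation (pact L2)"
    using islin_permutes assms permutation_pact by blast+
  ultimately show ?thesis by (simp add: evenperm_comp)
qed

definition ee :: "nat \<Rightarrow> 'a::zero_neq_one tri" where
  "ee i = (if i = 0 then (1, 0, 0) else if i = 1 then (0, 1, 0) else (0, 0, 1))"

definition tv :: "nat \<Rightarrow> nat \<Rightarrow> 'a::comm_ring_1 \<Rightarrow> 'a tri \<Rightarrow> 'a tri" where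
  "tv i j c v = v + smult3 (c * comp3 v j) (ee i)"

definition idx3 :: "nat \<Rightarrow> bool" where "idx3 i \<longleftrightarrow> i = 0 \<or> i = 1 \<or> i = 2"

lemma comp3_ee: "idx3 i \<Longrightarrow> idx3 j \<Longrightarrow> comp3 (ee i :: 'a::comm_ring_1 tri) j = (if i = j then 1 else 0)"
  unfolding idx3_def ee_def by (auto simp: comp3_def)

lemma islin_tv: "islin (tv i j (c :: 'a::comm_ring_1))"
  unfolding islin_def tv_def
  by (auto simp: comp3_add comp3_smult smult3_add_left smult3_add algebra_simps)

lemma tv_tv:
  assumes "(2::'a::comm_ring_1) = 0" "idx3 i" "idx3 j" "i \<noteq> j"
  shows "tv i j c (tv i j c v) = (v :: 'a tri)"
proof -
  have "comp3 (tv i j c v) j = comp3 v j"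
    unfolding tv_def using assms(2-4) by (simp add: comp3_add comp3_smult comp3_ee)
  then have "tv i j c (tv i j c v) = v + (smult3 (c * comp3 v j) (ee i) + smult3 (c * comp3 v j) (ee i))"
    by (simp add: tv_def add.assoc)
  then show ?thesis using tri_double[OF assms(1)] by (simp add: zero_tri)
qed

lemma inj_tv:
  assumes "(2::'a::comm_ring_1) = 0" "idx3 i" "idx3 j" "i \<noteq> j"
  shows "inj (tv i j (c :: 'a))"
  by (metis injI tv_tv[OF assms])

lemma pact_id_gen: "pact (\<lambda>v::'a::field tri. v) = id"
proof
  fix P :: "'a tri set"
  show "pact (\<lambda>v. v) P = id P"
    by (cases "P \<in> P2") (simp_all add: pact_def P2_rep)
qed

lemma card_comp_zero:
  assumes "idx3 j"
  shows "card {v :: 'a::{zero,finite} tri. comp3 v j = 0} = card (UNIV :: 'a set) ^ 2"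
proof -
  have inj1: "inj (\<lambda>(y::'a, z::'a). (0::'a, y, z))" by (auto simp: inj_def)
  have inj2: "inj (\<lambda>(y::'a, z::'a). (y, 0::'a, z))" by (auto simp: inj_def)
  have inj3: "inj (\<lambda>(y::'a, z::'a). (y, z, 0::'a))" by (auto simp: inj_def)
  have cu: "card (UNIV :: ('a \<times> 'a) set) = card (UNIV :: 'a set) ^ 2"
    by (simp add: power2_eq_square card_cartesian_product[symmetric])
  consider "j = 0" | "j = 1" | "j = 2" using assms unfolding idx3_def by blast
  then show ?thesis
  proof cases
    case 1
    then have "{v :: 'a tri. comp3 v j = 0} = range (\<lambda>(y::'a, z::'a). (0::'a, y, z))"
      by (auto simp: comp3_def image_def)
    then show ?thesis using card_image[OF inj1] cu by simp
  next
    case 2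
    then have "{v :: 'a tri. comp3 v j = 0} = range (\<lambda>(y::'a, z::'a). (y, 0::'a, z))"
      by (auto simp: comp3_def image_def)
    then show ?thesis using card_image[OF inj2] cu by simp
  next
    case 3
    then have "{v :: 'a tri. comp3 v j = 0} = range (\<lambda>(y::'a, z::'a). (y, z, 0::'a))"
      by (auto simp: comp3_def image_def)
    then show ?thesis using card_image[OF inj3] cu by simp
  qed
qed

lemma comp3_smult_nz: "c \<noteq> 0 \<Longrightarrow> comp3 (smult3 c v) j \<noteq> 0 \<longleftrightarrow> comp3 v j \<noteq> (0::'a::field)"
  by (simp add: comp3_smult)

lemma q2_half_even:
  assumes "m \<ge> 1"
  shows "even (((2::nat) ^ m) ^ 2 div 2)"
proof -
  obtain k where "m = Suc k" using assms by (cases m) auto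
  then have "((2::nat) ^ m) ^ 2 div 2 = 2 * (2 ^ k * 2 ^ k)" by (simp add: power2_eq_square)
  then show ?thesis by simp
qed

lemma evenperm_tv:
  fixes c :: "'a::{field,finite}"
  assumes card: "card (UNIV :: 'a set) = 2 ^ m" and m1: "m \<ge> 1"
    and ij: "idx3 i" "idx3 j" "i \<noteq> j"
  shows "evenperm (pact (tv i j c))"
proof (cases "c = 0")
  case True
  then have "tv i j c = (\<lambda>v. v)" by (simp add: fun_eq_iff tv_def zero_tri)
  then show ?thesis using pact_id_gen[where 'a='a] by simp
next
  case c0: False
  have two: "(2::'a) = 0" using char2_of_card[OF card m1] .
  let ?T = "tv i j c"
  have lin: "islin ?T" by (rule islin_tv)
  have inj: "inj ?T" by (rule inj_tv[OF two ij])
  have hom: "homog ?T" by (rule islin_homog[OF lin inj])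
  have perm: "pact ?T permutes P2" by (rule islin_permutes[OF lin inj])
  have inv: "pact ?T \<circ> pact ?T = id"
  proof -
    have "?T \<circ> ?T = (\<lambda>v. v)" using tv_tv[OF two ij] by (simp add: fun_eq_iff)
    then have "pact ?T \<circ> pact ?T = pact (\<lambda>v. v)" using pact_comp[OF hom hom] by metis
    then show ?thesis using pact_id_gen[where 'a='a] by simp
  qed
  define S where "S = {v :: 'a tri. comp3 v j \<noteq> 0}"
  have compT: "comp3 (?T v) j = comp3 v j" for v
    unfolding tv_def using ij by (simp add: comp3_add comp3_smult comp3_ee)
  have moved: "{P. pact ?T P \<noteq> P} = proj_pt ` S"
  proof (rule Set.set_eqI)
    fix P
    show "P \<in> {P. pact ?T P \<noteq> P} \<longleftrightarrow> P \<in> proj_pt ` S"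
    proof (cases "P \<in> P2")
      case False
      have "P \<notin> proj_pt ` S"
      proof
        assume "P \<in> proj_pt ` S"
        then obtain w where w: "w \<in> S" "P = proj_pt w" by blast
        then have "w \<noteq> (0, 0, 0)" unfolding S_def by (auto simp: comp3_def split: if_splits)
        from proj_pt_in_P2[OF this] show False using False w(2) by simp
      qed
      then show ?thesis using False by (simp add: pact_outside)
    next
      case True
      obtain v where v: "v \<noteq> (0, 0, 0)" "P = proj_pt v" using True by (rule P2_cases)
      have pT: "pact ?T P = proj_pt (?T v)" using pact_proj[OF hom v(1)] v(2) by simp
      have inS: "P \<in> proj_pt ` S \<longleftrightarrow> comp3 v j \<noteq> 0"
      proof
        assume "P \<in> proj_pt ` S"
        then obtain w where w: "comp3 w j \<noteq> 0" "P = proj_pt w" unfolding S_def by auto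
        have "proj_pt w = proj_pt v" using w(2) v(2) by simp
        then obtain d where "d \<noteq> 0" "w = smult3 d v" unfolding proj_pt_eq_iff by blast
        then show "comp3 v j \<noteq> 0" using w(1) by (simp add: comp3_smult)
      next
        assume "comp3 v j \<noteq> 0"
        then show "P \<in> proj_pt ` S" using v(2) unfolding S_def by blast
      qed
      show ?thesis
      proof (cases "comp3 v j = 0")
        case True
        then have "?T v = v" by (simp add: tv_def zero_tri)
        then show ?thesis using pT inS True v(2) by simp
      next
        case False
        have "proj_pt (?T v) \<noteq> proj_pt v"
        proof
          assume "proj_pt (?T v) = proj_pt v"
          then obtain d where d: "d \<noteq> 0" "?T v = smult3 d v" unfolding proj_pt_eq_iff by blast
          have "comp3 (?T v) j = d * comp3 v j" using d(2) by (simp add: comp3_smult)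
          then have "comp3 v j = d * comp3 v j" using compT[of v] by simp
          then have "d = 1" using False by simp
          then have "v + smult3 (c * comp3 v j) (ee i) = v" using d(2) by (simp add: tv_def)
          then have "smult3 (c * comp3 v j) (ee i) = 0" by simp
          then have "comp3 (smult3 (c * comp3 v j) (ee i)) i = 0" by (simp add: zero_tri comp3_def)
          then have "c * comp3 v j * comp3 (ee i :: 'a tri) i = 0" by (simp add: comp3_smult)
          moreover have "comp3 (ee i :: 'a tri) i = 1" using comp3_ee[OF ij(1) ij(1)] by simp
          ultimately show False using c0 False by simp
        qed
        then show ?thesis using pT inS False v(2) by simp
      qed
    qed
  qed
  have cardS: "card S = (card (UNIV :: 'a set) - 1) * card (proj_pt ` S)"
    by (rule card_scaled) (auto simp: S_def comp3_smult comp3_def split: if_splits)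
  have "card S = card (UNIV :: 'a tri set) - card {v :: 'a tri. comp3 v j = 0}"
  proof -
    have "S = UNIV - {v :: 'a tri. comp3 v j = 0}" unfolding S_def by auto
    then show ?thesis by (simp add: card_Diff_subset)
  qed
  then have "card S = (2 ^ m) ^ 3 - (2 ^ m) ^ 2" using card_tri[where 'a='a] card_comp_zero[OF ij(2), where 'a='a] card by simp
  moreover have "((2::nat) ^ m) ^ 3 - (2 ^ m) ^ 2 = (2 ^ m - 1) * ((2 ^ m) ^ 2)"
    by (simp add: power2_eq_square power3_eq_cube algebra_simps diff_mult_distrib)
  ultimately have "(2 ^ m - 1) * card (proj_pt ` S) = (2 ^ m - 1) * ((2::nat) ^ m) ^ 2" using cardS card by simp
  moreover have "(2::nat) ^ m - 1 \<noteq> 0"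
  proof -
    have "(2::nat) ^ 1 \<le> 2 ^ m" using power_increasing[OF m1, of "2::nat"] by simp
    then show ?thesis by simp
  qed
  ultimately have cm: "card (proj_pt ` S) = ((2::nat) ^ m) ^ 2" using mult_left_cancel by blast
  have "evenperm (pact ?T) = even (card {P. pact ?T P \<noteq> P} div 2)"
    by (rule involution_evenperm[OF finite_P2 perm inv])
  then show ?thesis using moved cm q2_half_even[OF m1] by simp
qed

lemma lin3_eval: "lin3 (a0, a1, a2) (b0, b1, b2) (c0, c1, c2) (x, y, z) =
  (x * a0 + y * b0 + z * c0, x * a1 + y * b1 + z * c1, x * a2 + y * b2 + z * c2)"
  by (simp add: lin3_def)

lemma tv_eval:
  "tv 1 0 c (x, y, z) = (x, y + c * x, z)"
  "tv 2 0 c (x, y, z) = (x, y, z + c * x)"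
  "tv 0 1 c (x, y, z) = (x + c * y, y, z)"
  "tv 2 1 c (x, y, z) = (x, y, z + c * y)"
  "tv 0 2 c (x, y, z) = (x + c * z, y, z)"
  "tv 1 2 c (x, y, z) = (x, y + c * z, z)"
  by (simp_all add: tv_def ee_def comp3_def)

lemma tv_eval':
  "tv (Suc 0) 0 c (x, y, z) = (x, y + c * x, z)"
  "tv 0 (Suc 0) c (x, y, z) = (x + c * y, y, z)"
  "tv 2 (Suc 0) c (x, y, z) = (x, y, z + c * y)"
  "tv (Suc 0) 2 c (x, y, z) = (x, y + c * z, z)"
  by (simp_all add: tv_def ee_def comp3_def)

lemma idx3_simps [simp]: "idx3 0" "idx3 1" "idx3 2" "idx3 (Suc 0)" by (simp_all add: idx3_def)

definition dg :: "'a::comm_semiring_1 \<Rightarrow> 'a \<Rightarrow> 'a \<Rightarrow> 'a tri \<Rightarrow> 'a tri" where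
  "dg a b c = lin3 (a, 0, 0) (0, b, 0) (0, 0, c)"

lemma dg_eval: "dg a b c (x, y, z) = (a * x, b * y, c * z)"
  by (simp add: dg_def lin3_eval mult.commute)

lemma dg_comp: "dg a b c \<circ> dg a' b' c' = dg (a * a') (b * b') (c * c')"
  by (auto simp: fun_eq_iff dg_eval mult.assoc)

lemma dg_one: "dg 1 1 1 = (\<lambda>v. v)"
  by (auto simp: fun_eq_iff dg_eval)

lemma pact_dg_one: "pact (dg 1 1 (1::'a::field)) = id"
  by (subst dg_one) (rule pact_id_gen)

lemma inj_dg: "a \<noteq> 0 \<Longrightarrow> b \<noteq> 0 \<Longrightarrow> c \<noteq> 0 \<Longrightarrow> inj (dg a b (c :: 'a::field))"
  by (auto simp: inj_def dg_eval)

lemma evenperm_dg: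
  fixes a b c :: "'a::{field,finite}"
  assumes card: "card (UNIV :: 'a set) = 2 ^ m" and m1: "m \<ge> 1"
    and nz: "a \<noteq> 0" "b \<noteq> 0" "c \<noteq> 0"
  shows "evenperm (pact (dg a b c))"
proof -
  have pw: "pact (dg a b c) ^^ n = pact (dg (a ^ n) (b ^ n) (c ^ n))" for n
  proof (induction n)
    case 0
    then show ?case using pact_dg_one[where 'a='a] by simp
  next
    case (Suc n)
    have h1: "homog (dg a b c)" using islin_homog[OF _ inj_dg[OF nz]] islin_lin3 dg_def by metis
    have h2: "homog (dg (a ^ n) (b ^ n) (c ^ n))"
      using islin_homog[OF _ inj_dg] islin_lin3 dg_def nz by (metis power_not_zero)
    have "pact (dg a b c) ^^ Suc n = pact (dg a b c) \<circ> pact (dg (a ^ n) (b ^ n) (c ^ n))"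
      using Suc by simp
    also have "\<dots> = pact (dg a b c \<circ> dg (a ^ n) (b ^ n) (c ^ n))" using pact_comp[OF h1 h2] by simp
    finally show ?case by (simp add: dg_comp)
  qed
  have one: "x ^ (2 ^ m - 1) = 1" if "x \<noteq> 0" for x :: 'a
  proof -
    have "x ^ (2 ^ m) = x" using fermat_finite_field[of x] card by simp
    moreover obtain k where "(2::nat) ^ m = Suc k" by (cases "(2::nat) ^ m") auto
    ultimately show ?thesis using that by simp
  qed
  have "pact (dg a b c) ^^ (2 ^ m - 1) = id"
    unfolding pw using one nz pact_dg_one[where 'a='a] by simp
  moreover have "odd ((2::nat) ^ m - 1)"
  proof -
    obtain k where "m = Suc k" using m1 by (cases m) auto
    then show ?thesis by simp
  qed
  moreover have "permutation (pact (dg a b c))"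
    using islin_permutes[OF _ inj_dg[OF nz]] islin_lin3 dg_def permutation_pact by metis
  ultimately show ?thesis using evenperm_odd_order by blast
qed

lemma red_left:
  fixes L :: "'a::{field,finite} tri \<Rightarrow> 'a tri"
  assumes card: "card (UNIV :: 'a set) = 2 ^ m" and m1: "m \<ge> 1"
    and ij: "idx3 i" "idx3 j" "i \<noteq> j" and L: "islin L" "inj L"
  shows "evenperm (pact (tv i j c \<circ> L)) = evenperm (pact L)" "inj (tv i j c \<circ> L)" "islin (tv i j c \<circ> L)"
proof -
  have two: "(2::'a) = 0" using char2_of_card[OF card m1] .
  show "evenperm (pact (tv i j c \<circ> L)) = evenperm (pact L)"
    using evenperm_lin_comp[OF islin_tv inj_tv[OF two ij] L] evenperm_tv[OF card m1 ij] by simp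
  show "inj (tv i j c \<circ> L)" using inj_tv[OF two ij] L(2) by (rule inj_compose)
  show "islin (tv i j c \<circ> L)" using islin_tv L(1) by (rule islin_comp)
qed

lemma red_right:
  fixes L :: "'a::{field,finite} tri \<Rightarrow> 'a tri"
  assumes card: "card (UNIV :: 'a set) = 2 ^ m" and m1: "m \<ge> 1"
    and ij: "idx3 i" "idx3 j" "i \<noteq> j" and L: "islin L" "inj L"
  shows "evenperm (pact (L \<circ> tv i j c)) = evenperm (pact L)" "inj (L \<circ> tv i j c)" "islin (L \<circ> tv i j c)"
proof -
  have two: "(2::'a) = 0" using char2_of_card[OF card m1] .
  show "evenperm (pact (L \<circ> tv i j c)) = evenperm (pact L)"
    using evenperm_lin_comp[OF L islin_tv inj_tv[OF two ij]] evenperm_tv[OF card m1 ij] by simp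
  show "inj (L \<circ> tv i j c)" using L(2) inj_tv[OF two ij] by (rule inj_compose)
  show "islin (L \<circ> tv i j c)" using L(1) islin_tv by (rule islin_comp)
qed

lemma elimB1:
  fixes \<alpha> b1 b2 c1 c2 :: "'a::{field,finite}"
  assumes card: "card (UNIV :: 'a set) = 2 ^ m" and m1: "m \<ge> 1"
    and a: "\<alpha> \<noteq> 0" and b1: "b1 \<noteq> 0"
    and inj: "inj (lin3 (\<alpha>, 0, 0) (0, b1, b2) (0, c1, c2))"
  shows "evenperm (pact (lin3 (\<alpha>, 0, 0) (0, b1, b2) (0, c1, c2)))"
proof -
  let ?L = "lin3 (\<alpha>, 0, 0) (0, b1, b2) (0, c1, c2)"
  let ?T1 = "tv 2 1 (- (b2 / b1)) :: 'a tri \<Rightarrow> 'a tri"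
  let ?T2 = "tv 1 2 (- (c1 / b1)) :: 'a tri \<Rightarrow> 'a tri"
  define \<gamma> where "\<gamma> = c2 - b2 * c1 / b1"
  have eq: "?T1 \<circ> ?L \<circ> ?T2 = dg \<alpha> b1 \<gamma>"
    using b1 by (auto simp: fun_eq_iff tv_eval tv_eval' lin3_eval dg_eval \<gamma>_def field_simps)
  have L1: "islin (?T1 \<circ> ?L)" "inj (?T1 \<circ> ?L)" "evenperm (pact (?T1 \<circ> ?L)) = evenperm (pact ?L)"
    using red_left[OF card m1 _ _ _ islin_lin3 inj, of 2 1] by auto
  have L2: "inj (?T1 \<circ> ?L \<circ> ?T2)" "evenperm (pact (?T1 \<circ> ?L \<circ> ?T2)) = evenperm (pact (?T1 \<circ> ?L))"
    using red_right[OF card m1 _ _ _ L1(1,2), of 1 2] by auto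
  have "\<gamma> \<noteq> 0"
  proof
    assume "\<gamma> = 0"
    then have "dg \<alpha> b1 \<gamma> (0, 0, 1) = dg \<alpha> b1 \<gamma> (0, 0, 0)" by (simp add: dg_eval)
    then show False using L2(1) eq by (metis injD zero_neq_one prod.inject)
  qed
  then have "evenperm (pact (dg \<alpha> b1 \<gamma>))" using evenperm_dg[OF card m1 a b1] by blast
  then show ?thesis using L1(3) L2(2) eq by simp
qed

lemma elimB:
  fixes \<alpha> b1 b2 c1 c2 :: "'a::{field,finite}"
  assumes card: "card (UNIV :: 'a set) = 2 ^ m" and m1: "m \<ge> 1"
    and a: "\<alpha> \<noteq> 0"
    and inj: "inj (lin3 (\<alpha>, 0, 0) (0, b1, b2) (0, c1, c2))"
  shows "evenperm (pact (lin3 (\<alpha>, 0, 0) (0, b1, b2) (0, c1, c2)))"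
proof (cases "b1 = 0")
  case False
  show ?thesis using elimB1[OF card m1 a False inj] .
next
  case True
  let ?L = "lin3 (\<alpha>, 0, 0) (0, b1, b2) (0, c1, c2)"
  let ?T = "tv 1 2 1 :: 'a tri \<Rightarrow> 'a tri"
  have "b2 \<noteq> 0"
  proof
    assume "b2 = 0"
    then have "?L (0, 1, 0) = ?L (0, 0, 0)" using True by (simp add: lin3_eval)
    then show False using inj by (metis injD zero_neq_one prod.inject)
  qed
  have eq: "?T \<circ> ?L = lin3 (\<alpha>, 0, 0) (0, b1 + b2, b2) (0, c1 + c2, c2)"
    by (auto simp: fun_eq_iff tv_eval tv_eval' lin3_eval algebra_simps)
  have L1: "inj (?T \<circ> ?L)" "evenperm (pact (?T \<circ> ?L)) = evenperm (pact ?L)"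
    using red_left[OF card m1 _ _ _ islin_lin3 inj, of 1 2] by auto
  have "evenperm (pact (lin3 (\<alpha>, 0, 0) (0, b1 + b2, b2) (0, c1 + c2, c2)))"
    using elimB1[OF card m1 a] True \<open>b2 \<noteq> 0\<close> L1(1) eq by simp
  then show ?thesis using L1(2) eq by simp
qed

lemma elimA1:
  fixes a0 a1 a2 b0 b1 b2 c0 c1 c2 :: "'a::{field,finite}"
  assumes card: "card (UNIV :: 'a set) = 2 ^ m" and m1: "m \<ge> 1"
    and a: "a0 \<noteq> 0"
    and inj: "inj (lin3 (a0, a1, a2) (b0, b1, b2) (c0, c1, c2))"
  shows "evenperm (pact (lin3 (a0, a1, a2) (b0, b1, b2) (c0, c1, c2)))"
proof -
  let ?L = "lin3 (a0, a1, a2) (b0, b1, b2) (c0, c1, c2)"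
  let ?T1 = "tv 1 0 (- (a1 / a0)) :: 'a tri \<Rightarrow> 'a tri"
  let ?T2 = "tv 2 0 (- (a2 / a0)) :: 'a tri \<Rightarrow> 'a tri"
  let ?R1 = "tv 0 1 (- (b0 / a0)) :: 'a tri \<Rightarrow> 'a tri"
  let ?R2 = "tv 0 2 (- (c0 / a0)) :: 'a tri \<Rightarrow> 'a tri"
  let ?M = "lin3 (a0, 0, 0) (0, b1 - a1 * b0 / a0, b2 - a2 * b0 / a0) (0, c1 - a1 * c0 / a0, c2 - a2 * c0 / a0)"
  have eq: "?T2 \<circ> (?T1 \<circ> ?L) \<circ> ?R1 \<circ> ?R2 = ?M"
    using a by (auto simp: fun_eq_iff tv_eval tv_eval' lin3_eval field_simps)
  have L1: "islin (?T1 \<circ> ?L)" "inj (?T1 \<circ> ?L)" "evenperm (pact (?T1 \<circ> ?L)) = evenperm (pact ?L)"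
    using red_left[OF card m1 _ _ _ islin_lin3 inj, of 1 0] by auto
  have L2: "islin (?T2 \<circ> (?T1 \<circ> ?L))" "inj (?T2 \<circ> (?T1 \<circ> ?L))"
      "evenperm (pact (?T2 \<circ> (?T1 \<circ> ?L))) = evenperm (pact (?T1 \<circ> ?L))"
    using red_left[OF card m1 _ _ _ L1(1,2), of 2 0] by auto
  have L3: "islin (?T2 \<circ> (?T1 \<circ> ?L) \<circ> ?R1)" "inj (?T2 \<circ> (?T1 \<circ> ?L) \<circ> ?R1)"
      "evenperm (pact (?T2 \<circ> (?T1 \<circ> ?L) \<circ> ?R1)) = evenperm (pact (?T2 \<circ> (?T1 \<circ> ?L)))"
    using red_right[OF card m1 _ _ _ L2(1,2), of 0 1] by auto
  have L4: "inj (?T2 \<circ> (?T1 \<circ> ?L) \<circ> ?R1 \<circ> ?R2)"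
      "evenperm (pact (?T2 \<circ> (?T1 \<circ> ?L) \<circ> ?R1 \<circ> ?R2)) = evenperm (pact (?T2 \<circ> (?T1 \<circ> ?L) \<circ> ?R1))"
    using red_right[OF card m1 _ _ _ L3(1,2), of 0 2] by auto
  have "evenperm (pact ?M)" using elimB[OF card m1 a] L4(1) eq by simp
  then show ?thesis using L1(3) L2(3) L3(3) L4(2) eq by simp
qed

lemma elimA:
  fixes a0 a1 a2 b0 b1 b2 c0 c1 c2 :: "'a::{field,finite}"
  assumes card: "card (UNIV :: 'a set) = 2 ^ m" and m1: "m \<ge> 1"
    and inj: "inj (lin3 (a0, a1, a2) (b0, b1, b2) (c0, c1, c2))"
  shows "evenperm (pact (lin3 (a0, a1, a2) (b0, b1, b2) (c0, c1, c2)))"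
proof -
  let ?L = "lin3 (a0, a1, a2) (b0, b1, b2) (c0, c1, c2)"
  have anz: "(a0, a1, a2) \<noteq> (0, 0, 0)"
  proof
    assume "(a0, a1, a2) = (0, 0, 0)"
    then have "?L (1, 0, 0) = ?L (0, 0, 0)" by (simp add: lin3_eval)
    then show False using inj by (metis injD zero_neq_one prod.inject)
  qed
  show ?thesis
  proof (cases "a0 = 0")
    case False
    show ?thesis using elimA1[OF card m1 False inj] .
  next
    case a0: True
    show ?thesis
    proof (cases "a1 = 0")
      case False
      let ?T = "tv 0 1 1 :: 'a tri \<Rightarrow> 'a tri"
      have eq: "?T \<circ> ?L = lin3 (a0 + a1, a1, a2) (b0 + b1, b1, b2) (c0 + c1, c1, c2)"
        by (auto simp: fun_eq_iff tv_eval tv_eval' lin3_eval algebra_simps)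
      have L1: "inj (?T \<circ> ?L)" "evenperm (pact (?T \<circ> ?L)) = evenperm (pact ?L)"
        using red_left[OF card m1 _ _ _ islin_lin3 inj, of 0 1] by auto
      have "evenperm (pact (lin3 (a0 + a1, a1, a2) (b0 + b1, b1, b2) (c0 + c1, c1, c2)))"
        using elimA1[OF card m1] a0 False L1(1) eq by simp
      then show ?thesis using L1(2) eq by simp
    next
      case a1: True
      then have "a2 \<noteq> 0" using anz a0 by simp
      let ?T = "tv 0 2 1 :: 'a tri \<Rightarrow> 'a tri"
      have eq: "?T \<circ> ?L = lin3 (a0 + a2, a1, a2) (b0 + b2, b1, b2) (c0 + c2, c1, c2)"
        by (auto simp: fun_eq_iff tv_eval tv_eval' lin3_eval algebra_simps)
      have L1: "inj (?T \<circ> ?L)" "evenperm (pact (?T \<circ> ?L)) = evenperm (pact ?L)"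
        using red_left[OF card m1 _ _ _ islin_lin3 inj, of 0 2] by auto
      have "evenperm (pact (lin3 (a0 + a2, a1, a2) (b0 + b2, b1, b2) (c0 + c2, c1, c2)))"
        using elimA1[OF card m1] a0 \<open>a2 \<noteq> 0\<close> L1(1) eq by simp
      then show ?thesis using L1(2) eq by simp
    qed
  qed
qed

lemma GL_even:
  fixes L :: "'a::{field,finite} tri \<Rightarrow> 'a tri"
  assumes card: "card (UNIV :: 'a set) = 2 ^ m" and m1: "m \<ge> 1"
    and L: "islin L" "inj L"
  shows "evenperm (pact L)"
proof -
  have eq: "L = lin3 (L (1, 0, 0)) (L (0, 1, 0)) (L (0, 0, 1))"
  proof
    fix v :: "'a tri"
    obtain x y z where v: "v = (x, y, z)" by (cases v) auto
    have "v = smult3 x (1, 0, 0) + smult3 y (0, 1, 0) + smult3 z (0, 0, 1)" using v by simp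
    then have "L v = smult3 x (L (1, 0, 0)) + smult3 y (L (0, 1, 0)) + smult3 z (L (0, 0, 1))"
      using islin_add[OF L(1)] islin_smult[OF L(1)] by metis
    then show "L v = lin3 (L (1, 0, 0)) (L (0, 1, 0)) (L (0, 0, 1)) v" using v by (simp add: lin3_def)
  qed
  obtain a0 a1 a2 where a: "L (1, 0, 0) = (a0, a1, a2)" by (cases "L (1, 0, 0)") auto
  obtain b0 b1 b2 where b: "L (0, 1, 0) = (b0, b1, b2)" by (cases "L (0, 1, 0)") auto
  obtain c0 c1 c2 where c: "L (0, 0, 1) = (c0, c1, c2)" by (cases "L (0, 0, 1)") auto
  have "L = lin3 (a0, a1, a2) (b0, b1, b2) (c0, c1, c2)" using eq a b c by simp
  then show ?thesis using elimA[OF card m1] L(2) by simp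
qed


lemma parity_q:
  assumes "m \<ge> (1::nat)"
  shows "even ((((2::nat) ^ m) ^ 2 + 2 ^ m) div 2) \<longleftrightarrow> m \<noteq> 1"
proof (cases "m = 1")
  case True
  then show ?thesis by simp
next
  case False
  then obtain k where k: "m = Suc (Suc k)" using assms by (cases m; cases "m - 1") auto
  have "((2::nat) ^ m) ^ 2 + 2 ^ m = 2 * (2 * (2 ^ k * (2 ^ m + 1)))"
    unfolding k by (simp add: power2_eq_square algebra_simps)
  then show ?thesis using False by simp
qed

context qt2
begin

lemma islin_Lmap: "islin Lmap"
  unfolding islin_def using Lmap_add Lmap_smult by blast

lemma inj_Lmap: "inj Lmap"
  using Lmap_inj by (rule injI)

lemma final:
  "induced_map C permutes P2 \<and> (if m = 1 then \<not> evenperm (induced_map C) else evenperm (induced_map C))"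
proof -
  have eL: "evenperm (pact Lmap)" by (rule GL_even[OF card m1 islin_Lmap inj_Lmap])
  have perm: "induced_map C permutes P2"
    unfolding induced_decomp by (rule permutes_compose[OF jm_permutes Lmap_permutes])
  have "evenperm (induced_map C) = (evenperm (pact Lmap) = evenperm (pact jm))"
    unfolding induced_decomp
    by (rule evenperm_comp) (use permutation_pact Lmap_permutes jm_permutes in blast)+
  then have "evenperm (induced_map C) = even ((q^2 + q) div 2)" using eL jm_evenperm by simp
  then have "evenperm (induced_map C) \<longleftrightarrow> m \<noteq> 1" using parity_q[OF m1] by simp
  then show ?thesis using perm by simp
qed

end

theorem proposition4p7:
  fixes C D :: "nat \<Rightarrow> nat \<Rightarrow> nat \<Rightarrow> 'a::{field, finite}"
    and m :: nat
  assumes "m \<ge> 1"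
    and "card (UNIV :: 'a set) = 2 ^ m"
    and "quadratic_transformation C"
    and "inverse_quadmap D C"
    and "\<forall>v::'a tri. v \<noteq> (0, 0, 0) \<longrightarrow> quadmap C v \<noteq> (0, 0, 0) \<and> quadmap D v \<noteq> (0, 0, 0)"
  shows "induced_map C permutes P2 \<and>
         (if m = 1 then \<not> evenperm (induced_map C) else evenperm (induced_map C))"
proof -
  obtain A B :: "nat \<Rightarrow> nat \<Rightarrow> 'a alg_closure" where AB: "det3 A \<noteq> 0" "det3 B \<noteq> 0"
    "\<forall>v. quadmap (lift_coeffs C) v = linmap A (stdquad (linmap B v))"
    using assms(3) unfolding quadratic_transformation_def by blast
  interpret qt C m A B
    by unfold_locales (use assms AB in auto)
  obtain b j1 j2 where bj: "fr3 (fr3 (fr3 b)) = b" "ax 0 b" "ax j1 (fr3 b)" "ax j2 (fr3 (fr3 b))"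
    "j1 \<noteq> 0" "j2 \<noteq> 0" "j1 \<noteq> j2" by (rule cycle)
  interpret qt2 C m A B b j1 j2
    by unfold_locales (use bj in auto)
  show ?thesis by (rule final)
qed


end
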